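(* Fix $m\ge2$ and let $f(\ell)=o(1)$. Suppose there exists a function $k:\mathbb N\to\mathbb N$ with $k(\ell)\le \ell$ for all $\ell$ such that, as $\ell\to\infty$, $$k(\ell)-2\ell f(\ell)\to\infty \qquad\text{and}\qquad \frac{\ell-2}{(2k(\ell)+2)(2m-1)^{2k(\ell)}}\to\infty .$$ Then asymptotically almost surely a random group $G\in\mathcal H(f)$ is isomorphic to $1$ or to $\mathbb Z/2\mathbb Z$.
   Context: The random group model $\mathcal H(f)$: for each length $\ell$, choose $(2m-1)^{\ell(\frac12-f(\ell))}$ relators (an integer count), independently and uniformly at random from the freely reduced words of length $\ell$ (not necessarily cyclically reduced) in $m$ generators and their inverses; $G$ is the group presented by the $m$ generators and these relators. "Asymptotically almost surely" means with probability tending to $1$ as $\ell\to\infty$. *)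

theory Defs
  imports "HOL-Analysis.Analysis" "HOL-Algebra.Algebra"
begin

text \<open>Letters: (i, False) is the generator a_i, (i, True) is its inverse; generators are 0..m-1.\<close>
type_synonym letter = "nat \<times> bool"

definition inv_letter :: "letter \<Rightarrow> letter" where
  "inv_letter a = (fst a, \<not> snd a)"

definition letters :: "nat \<Rightarrow> letter set" where
  "letters m = {a. fst a < m}"

fun freely_reduced :: "letter list \<Rightarrow> bool" where
  "freely_reduced (a # b # w) = (b \<noteq> inv_letter a \<and> freely_reduced (b # w))"
| "freely_reduced _ = True"

definition reduced_words :: "nat \<Rightarrow> nat \<Rightarrow> letter list set" where
  "reduced_words m l = {w. set w \<subseteq> letters m \<and> length w = l \<and> freely_reduced w}"

inductive pres_step :: "letter list set \<Rightarrow> letter list \<Rightarrow> letter list \<Rightarrow> bool" for R where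
  cancel: "pres_step R (u @ v) (u @ [a, inv_letter a] @ v)"
| relator: "r \<in> R \<Longrightarrow> pres_step R (u @ v) (u @ r @ v)"

definition pres_rel :: "nat \<Rightarrow> letter list set \<Rightarrow> (letter list \<times> letter list) set" where
  "pres_rel m R = Restr ((({(x, y). pres_step R x y} \<union> {(x, y). pres_step R y x}))\<^sup>*)
                        (lists (letters m))"

definition presented_group :: "nat \<Rightarrow> letter list set \<Rightarrow> letter list set monoid" where
  "presented_group m R =
     \<lparr>carrier = lists (letters m) // pres_rel m R,
      monoid.mult = (\<lambda>P Q. Image (pres_rel m R) {x @ y | x y. x \<in> P \<and> y \<in> Q}),
      one = Image (pres_rel m R) {[]}\<rparr>"

definition Z2_group :: "int monoid" where
  "Z2_group = \<lparr>carrier = {0, 1}, monoid.mult = (\<lambda>x y. (x + y) mod 2), one = 0\<rparr>"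

definition num_relators :: "nat \<Rightarrow> (nat \<Rightarrow> real) \<Rightarrow> nat \<Rightarrow> nat" where
  "num_relators m f l = nat \<lfloor>(2 * real m - 1) powr (real l * (1/2 - f l))\<rfloor>"

text \<open>All relator tuples (independent uniform choices = uniform on tuples).\<close>
definition relator_tuples :: "nat \<Rightarrow> (nat \<Rightarrow> real) \<Rightarrow> nat \<Rightarrow> letter list list set" where
  "relator_tuples m f l = {rs. length rs = num_relators m f l \<and> set rs \<subseteq> reduced_words m l}"

definition prob_H :: "nat \<Rightarrow> (nat \<Rightarrow> real) \<Rightarrow> nat \<Rightarrow> (letter list set monoid \<Rightarrow> bool) \<Rightarrow> real" where
  "prob_H m f l P = real (card {rs \<in> relator_tuples m f l. P (presented_group m (set rs))})
                     / real (card (relator_tuples m f l))"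

end

theory Submission
  imports Defs "HOL-Analysis.Analysis" "HOL-Real_Asymp.Real_Asymp"
begin


lemma letters_eq: "letters m = {..<m} \<times> UNIV"
  unfolding letters_def by auto

lemma inv_inv_letter[simp]: "inv_letter (inv_letter a) = a"
  unfolding inv_letter_def by simp

lemma finite_letters[simp]: "finite (letters m)" unfolding letters_eq by simp

lemma card_letters: "card (letters m) = 2 * m"
  unfolding letters_eq by (simp add: card_cartesian_product)

lemma inv_letter_in[simp]: "inv_letter a \<in> letters m \<longleftrightarrow> a \<in> letters m"
  unfolding inv_letter_def letters_def by simp

lemma finite_RW[simp]: "finite (reduced_words m l)"
proof -
  have "reduced_words m l \<subseteq> {w. set w \<subseteq> letters m \<and> length w = l}"
    unfolding reduced_words_def by auto
  then show ?thesis using finite_lists_length_eq[of "letters m" l] finite_subset by auto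
qed

lemma FR_Cons: "freely_reduced (x # w) \<longleftrightarrow> freely_reduced w \<and> (w = [] \<or> hd w \<noteq> inv_letter x)"
  by (cases w) auto

lemma FR_snoc: "freely_reduced (xs @ [y]) \<longleftrightarrow> freely_reduced xs \<and> (xs = [] \<or> y \<noteq> inv_letter (last xs))"
proof (induction xs rule: freely_reduced.induct)
  case (1 a b w) then show ?case by auto
next
  case ("2_1") then show ?case by simp
next
  case ("2_2" a) then show ?case by simp
qed

lemma FR_mid: "freely_reduced (u @ y # v) \<longleftrightarrow> freely_reduced (u @ [y]) \<and> freely_reduced (y # v)"
proof (induction u rule: freely_reduced.induct)
  case (1 a b w) then show ?case by (auto simp: FR_Cons)
next
  case ("2_1") then show ?case by simp
next
  case ("2_2" a) then show ?case by (auto simp: FR_Cons)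
qed

lemma card_diff_insert_ge:
  assumes "finite E"
  shows "card (letters m - insert z E) \<ge> 2 * m - 1 - card E"
proof -
  have "card (letters m) - card (insert z E) \<le> card (letters m - insert z E)"
    by (rule diff_card_le_card_Diff) (use assms in simp)
  moreover have "card (insert z E) \<le> card E + 1" using card_insert_le_m1 assms
    by (simp add: card_insert_if)
  ultimately show ?thesis using card_letters[of m] by linarith
qed

lemma RW_hd_lower:
  assumes "finite E"
  shows "card {w \<in> reduced_words m (Suc n). hd w \<notin> E} \<ge> (2 * m - 1 - card E) * card (reduced_words m n)"
proof -
  define S where "S = Sigma (reduced_words m n) (\<lambda>v. letters m - insert (inv_letter (hd v)) E)"
  have "inj_on (\<lambda>(v, y). y # v) S" by (auto simp: inj_on_def)
  moreover have "(\<lambda>(v, y). y # v) ` S \<subseteq> {w \<in> reduced_words m (Suc n). hd w \<notin> E}"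
  proof
    fix x assume "x \<in> (\<lambda>(v, y). y # v) ` S"
    then obtain v y where "v \<in> reduced_words m n" "y \<in> letters m" "y \<noteq> inv_letter (hd v)" "y \<notin> E" "x = y # v"
      unfolding S_def by auto
    moreover have "hd v \<noteq> inv_letter y" using \<open>y \<noteq> inv_letter (hd v)\<close> by auto
    ultimately show "x \<in> {w \<in> reduced_words m (Suc n). hd w \<notin> E}"
      by (auto simp: reduced_words_def FR_Cons)
  qed
  moreover have "finite {w \<in> reduced_words m (Suc n). hd w \<notin> E}" by simp
  ultimately have "card S \<le> card {w \<in> reduced_words m (Suc n). hd w \<notin> E}" by (meson card_inj_on_le)
  moreover have "card S = (\<Sum>v\<in>reduced_words m n. card (letters m - insert (inv_letter (hd v)) E))"
    unfolding S_def by (rule card_SigmaI) auto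
  moreover have "(\<Sum>v\<in>reduced_words m n. card (letters m - insert (inv_letter (hd v)) E))
       \<ge> (\<Sum>v\<in>reduced_words m n. 2 * m - 1 - card E)"
    by (rule sum_mono) (rule card_diff_insert_ge[OF assms])
  ultimately show ?thesis by (simp add: mult.commute)
qed

lemma RW_last_lower:
  assumes "finite E"
  shows "card {w \<in> reduced_words m (Suc n). last w \<notin> E} \<ge> (2 * m - 1 - card E) * card (reduced_words m n)"
proof -
  define S where "S = Sigma (reduced_words m n) (\<lambda>v. letters m - insert (inv_letter (last v)) E)"
  have "inj_on (\<lambda>(v, y). v @ [y]) S" by (auto simp: inj_on_def)
  moreover have "(\<lambda>(v, y). v @ [y]) ` S \<subseteq> {w \<in> reduced_words m (Suc n). last w \<notin> E}"
  proof
    fix x assume "x \<in> (\<lambda>(v, y). v @ [y]) ` S"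
    then obtain v y where "v \<in> reduced_words m n" "y \<in> letters m" "y \<noteq> inv_letter (last v)" "y \<notin> E" "x = v @ [y]"
      unfolding S_def by auto
    then show "x \<in> {w \<in> reduced_words m (Suc n). last w \<notin> E}"
      by (auto simp: reduced_words_def FR_snoc)
  qed
  moreover have "finite {w \<in> reduced_words m (Suc n). last w \<notin> E}" by simp
  ultimately have "card S \<le> card {w \<in> reduced_words m (Suc n). last w \<notin> E}" by (meson card_inj_on_le)
  moreover have "card S = (\<Sum>v\<in>reduced_words m n. card (letters m - insert (inv_letter (last v)) E))"
    unfolding S_def by (rule card_SigmaI) auto
  moreover have "(\<Sum>v\<in>reduced_words m n. card (letters m - insert (inv_letter (last v)) E))
       \<ge> (\<Sum>v\<in>reduced_words m n. 2 * m - 1 - card E)"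
    by (rule sum_mono) (rule card_diff_insert_ge[OF assms])
  ultimately show ?thesis by (simp add: mult.commute)
qed

lemma RW_lower: "card (reduced_words m n) \<ge> (2 * m - 1) ^ n"
proof (induction n)
  case 0
  have "reduced_words m 0 = {[]}" by (auto simp: reduced_words_def)
  then show ?case by simp
next
  case (Suc n)
  have "(2 * m - 1) * card (reduced_words m n) \<le> card (reduced_words m (Suc n))"
    using RW_hd_lower[of "{}" m n] by simp
  moreover have "(2 * m - 1) ^ Suc n \<le> (2 * m - 1) * card (reduced_words m n)"
    using Suc by simp
  ultimately show ?case by linarith
qed

lemma RW_upper: "m \<ge> 1 \<Longrightarrow> card (reduced_words m n) \<le> 2 * (2 * m - 1) ^ n"
proof (induction n)
  case 0
  have "reduced_words m 0 = {[]}" by (auto simp: reduced_words_def)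
  then show ?case by simp
next
  case (Suc n)
  show ?case
  proof (cases n)
    case 0
    have sub: "reduced_words m (Suc 0) \<subseteq> (\<lambda>y. [y]) ` letters m"
    proof
      fix w assume "w \<in> reduced_words m (Suc 0)"
      then have "length w = 1" "set w \<subseteq> letters m" by (auto simp: reduced_words_def)
      then obtain y where "w = [y]" "y \<in> letters m" by (cases w) auto
      then show "w \<in> (\<lambda>y. [y]) ` letters m" by blast
    qed
    have "card (reduced_words m (Suc 0)) \<le> card ((\<lambda>y. [y]) ` letters m)"
      using sub by (intro card_mono) auto
    also have "\<dots> \<le> card (letters m)" by (rule card_image_le) simp
    finally show ?thesis using 0 Suc.prems by (simp add: card_letters)
  next
    case (Suc n')
    define S where "S = Sigma (reduced_words m n) (\<lambda>v. letters m - {inv_letter (hd v)})"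
    have "reduced_words m (Suc n) \<subseteq> (\<lambda>(v, y). y # v) ` S"
    proof
      fix w assume w: "w \<in> reduced_words m (Suc n)"
      then have lw: "length w = Suc n" by (simp add: reduced_words_def)
      then obtain y v where yv: "w = y # v" by (cases w) auto
      have lv: "length v = n" using lw yv by simp
      then have "v \<noteq> []" using Suc by auto
      have fr: "freely_reduced v" "hd v \<noteq> inv_letter y" using w yv \<open>v \<noteq> []\<close>
        by (simp_all add: reduced_words_def FR_Cons)
      have "y \<noteq> inv_letter (hd v)"
      proof
        assume "y = inv_letter (hd v)"
        then have "inv_letter y = hd v" by simp
        then show False using fr(2) by simp
      qed
      moreover have "v \<in> reduced_words m n" "y \<in> letters m"
        using w yv lv fr(1) by (auto simp: reduced_words_def)
      ultimately have "(v, y) \<in> S" by (simp add: S_def)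
      then show "w \<in> (\<lambda>(v, y). y # v) ` S" using yv by force
    qed
    moreover have fS: "finite S" unfolding S_def by auto
    ultimately have "card (reduced_words m (Suc n)) \<le> card ((\<lambda>(v, y). y # v) ` S)"
      by (intro card_mono) auto
    also have "\<dots> \<le> card S" using fS by (rule card_image_le)
    also have "card S = (\<Sum>v\<in>reduced_words m n. card (letters m - {inv_letter (hd v)}))"
      unfolding S_def by (rule card_SigmaI) auto
    also have "\<dots> \<le> (\<Sum>v\<in>reduced_words m n. 2 * m - 1)"
    proof (rule sum_mono)
      fix v assume v: "v \<in> reduced_words m n"
      then have "v \<noteq> []" using Suc by (auto simp: reduced_words_def)
      then have "hd v \<in> letters m" using v by (auto simp: reduced_words_def)
      then have "inv_letter (hd v) \<in> letters m" by simp
      then show "card (letters m - {inv_letter (hd v)}) \<le> 2 * m - 1"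
        by (simp add: card_letters)
    qed
    also have "\<dots> = (2 * m - 1) * card (reduced_words m n)" by simp
    also have "\<dots> \<le> (2 * m - 1) * (2 * (2 * m - 1) ^ n)" using Suc.IH Suc.prems by simp
    finally show ?thesis by (simp add: algebra_simps)
  qed
qed


lemma step_app_left: "pres_step R x y \<Longrightarrow> pres_step R (z @ x) (z @ y)"
proof (induction rule: pres_step.induct)
  case (cancel u v a) show ?case using pres_step.cancel[of R "z@u" v a] by simp
next
  case (relator r u v) show ?case using pres_step.relator[OF relator, of "z@u" v] by simp
qed

lemma step_app_right: "pres_step R x y \<Longrightarrow> pres_step R (x @ z) (y @ z)"
proof (induction rule: pres_step.induct)
  case (cancel u v a) show ?case using pres_step.cancel[of R u "v@z" a] by simp
next
  case (relator r u v) show ?case using pres_step.relator[OF relator, of u "v@z"] by simp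
qed

definition E :: "letter list set \<Rightarrow> (letter list \<times> letter list) set" where
  "E R = ({(x, y). pres_step R x y} \<union> {(x, y). pres_step R y x})\<^sup>*"

lemma pres_rel_E: "pres_rel m R = Restr (E R) (lists (letters m))"
  unfolding pres_rel_def E_def by simp

lemma E_sym: "(x, y) \<in> E R \<Longrightarrow> (y, x) \<in> E R"
  unfolding E_def
proof (induction rule: rtrancl_induct)
  case base then show ?case by simp
next
  case (step y z)
  then have "(z, y) \<in> ({(x, y). pres_step R x y} \<union> {(x, y). pres_step R y x})\<^sup>*" by auto
  then show ?case using step(3) by (rule rtrancl_trans)
qed

lemma E_trans: "(x, y) \<in> E R \<Longrightarrow> (y, z) \<in> E R \<Longrightarrow> (x, z) \<in> E R"
  unfolding E_def by (rule rtrancl_trans)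

lemma E_step: "pres_step R x y \<Longrightarrow> (x, y) \<in> E R"
  unfolding E_def by auto

lemma E_refl: "(x, x) \<in> E R" unfolding E_def by simp

lemma E_app_left: "(x, y) \<in> E R \<Longrightarrow> (z @ x, z @ y) \<in> E R"
  unfolding E_def
proof (induction rule: rtrancl_induct)
  case base then show ?case by simp
next
  case (step y w)
  then have "(z @ y, z @ w) \<in> ({(x, y). pres_step R x y} \<union> {(x, y). pres_step R y x})"
    using step_app_left by auto
  then show ?case using step(3) by (meson rtrancl_into_rtrancl)
qed

lemma E_app_right: "(x, y) \<in> E R \<Longrightarrow> (x @ z, y @ z) \<in> E R"
  unfolding E_def
proof (induction rule: rtrancl_induct)
  case base then show ?case by simp
next
  case (step y w)
  then have "(y @ z, w @ z) \<in> ({(x, y). pres_step R x y} \<union> {(x, y). pres_step R y x})"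
    using step_app_right by auto
  then show ?case using step(3) by (meson rtrancl_into_rtrancl)
qed

lemma E_app: "(x, y) \<in> E R \<Longrightarrow> (x', y') \<in> E R \<Longrightarrow> (x @ x', y @ y') \<in> E R"
  by (meson E_app_left E_app_right E_trans)

definition inv_word :: "letter list \<Rightarrow> letter list" where
  "inv_word u = rev (map inv_letter u)"


lemma E_cancel_pair: "([], [a, inv_letter a]) \<in> E R"
  using E_step[OF pres_step.cancel[of R "[]" "[]" a]] by simp

lemma E_inv_left: "([], inv_word u @ u) \<in> E R"
proof (induction u)
  case Nil then show ?case by (simp add: inv_word_def E_refl)
next
  case (Cons a u)
  have "inv_word (a # u) @ a # u = inv_word u @ ([inv_letter a, a] @ u)"
    by (simp add: inv_word_def)
  moreover have "(inv_word u @ u, inv_word u @ ([inv_letter a, a] @ u)) \<in> E R"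
    using E_step[OF pres_step.cancel[of R "inv_word u" u "inv_letter a"]] by simp
  ultimately show ?case using Cons E_trans by metis
qed

lemma E_inv_right: "([], u @ inv_word u) \<in> E R"
proof (induction u rule: rev_induct)
  case Nil then show ?case by (simp add: inv_word_def E_refl)
next
  case (snoc a u)
  have "(u @ [a]) @ inv_word (u @ [a]) = u @ ([a, inv_letter a] @ inv_word u)"
    by (simp add: inv_word_def)
  moreover have "(u @ inv_word u, u @ ([a, inv_letter a] @ inv_word u)) \<in> E R"
    using E_step[OF pres_step.cancel[of R u "inv_word u" a]] by simp
  ultimately show ?case using snoc E_trans by metis
qed

lemma E_rel: "r \<in> R \<Longrightarrow> ([], r) \<in> E R"
proof -
  assume "r \<in> R"
  then have "pres_step R ([] @ []) ([] @ r @ [])" by (rule pres_step.relator)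
  then show ?thesis using E_step by fastforce
qed

lemma E_letter_eq:
  assumes "u @ [c] @ v \<in> R" "u @ [d] @ v \<in> R"
  shows "([c], [d]) \<in> E R"
proof -
  have key: "([x], inv_word u @ inv_word v) \<in> E R" if "u @ [x] @ v \<in> R" for x
  proof -
    have "([x], (inv_word u @ u) @ [x] @ (v @ inv_word v)) \<in> E R"
      using E_app[OF E_inv_left[where R=R and u=u] E_app[OF E_refl[where R=R and x="[x]"] E_inv_right[where R=R and u=v]]] by simp
    also have "(inv_word u @ u) @ [x] @ (v @ inv_word v) = inv_word u @ (u @ [x] @ v) @ inv_word v"
      by simp
    finally have 1: "([x], inv_word u @ (u @ [x] @ v) @ inv_word v) \<in> E R" .
    have "(inv_word u @ inv_word v, inv_word u @ (u @ [x] @ v) @ inv_word v) \<in> E R"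
      using E_step[OF pres_step.relator[OF that, of "inv_word u" "inv_word v"]] by simp
    then show ?thesis using 1 E_sym E_trans by metis
  qed
  show ?thesis using key[OF assms(1)] key[OF assms(2)] E_sym E_trans by metis
qed


lemma cls_eq: "w \<in> lists (letters m) \<Longrightarrow> pres_rel m R `` {w} = {y \<in> lists (letters m). (w, y) \<in> E R}"
  unfolding pres_rel_E by auto

lemma cls_eqI: "w \<in> lists (letters m) \<Longrightarrow> w' \<in> lists (letters m) \<Longrightarrow> (w, w') \<in> E R
   \<Longrightarrow> pres_rel m R `` {w} = pres_rel m R `` {w'}"
  unfolding cls_eq by (auto intro: E_trans E_sym)

lemma cls_mult:
  assumes "u \<in> lists (letters m)" "v \<in> lists (letters m)"
  shows "monoid.mult (presented_group m R) (pres_rel m R `` {u}) (pres_rel m R `` {v}) = pres_rel m R `` {u @ v}"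
proof -
  let ?S = "{x @ y |x y. x \<in> pres_rel m R `` {u} \<and> y \<in> pres_rel m R `` {v}}"
  have "pres_rel m R `` ?S \<subseteq> pres_rel m R `` {u @ v}"
  proof
    fix z assume "z \<in> pres_rel m R `` ?S"
    then obtain x y where xy: "x \<in> pres_rel m R `` {u}" "y \<in> pres_rel m R `` {v}" "(x @ y, z) \<in> pres_rel m R"
      by blast
    then have "(u, x) \<in> E R" "(v, y) \<in> E R" "(x @ y, z) \<in> E R" "z \<in> lists (letters m)"
      using assms unfolding pres_rel_E by auto
    then have "(u @ v, z) \<in> E R" by (meson E_app E_trans)
    then show "z \<in> pres_rel m R `` {u @ v}" using assms \<open>z \<in> lists (letters m)\<close>
      unfolding pres_rel_E by auto
  qed
  moreover have "pres_rel m R `` {u @ v} \<subseteq> pres_rel m R `` ?S"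
  proof -
    have "u \<in> pres_rel m R `` {u}" "v \<in> pres_rel m R `` {v}" using assms unfolding pres_rel_E
      by (auto simp: E_refl)
    then have "u @ v \<in> ?S" by blast
    then show ?thesis by blast
  qed
  ultimately show ?thesis unfolding presented_group_def by auto
qed

lemma all_words:
  assumes a0: "a0 \<in> letters m" and gen: "\<And>x. x \<in> letters m \<Longrightarrow> ([x], [a0]) \<in> E R"
    and sq: "([a0, a0], []) \<in> E R"
  shows "w \<in> lists (letters m) \<Longrightarrow> (w, []) \<in> E R \<or> (w, [a0]) \<in> E R"
proof (induction w)
  case Nil then show ?case by (simp add: E_refl)
next
  case (Cons x w)
  then have x: "([x], [a0]) \<in> E R" and IH: "(w, []) \<in> E R \<or> (w, [a0]) \<in> E R" using gen by auto
  show ?case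
  proof (cases "(w, []) \<in> E R")
    case True
    then have "([x] @ w, [a0] @ []) \<in> E R" using E_app x by blast
    then show ?thesis by simp
  next
    case False
    then have "(w, [a0]) \<in> E R" using IH by blast
    then have "([x] @ w, [a0] @ [a0]) \<in> E R" using E_app x by blast
    then have "(x # w, []) \<in> E R" using sq E_trans by fastforce
    then show ?thesis by simp
  qed
qed

lemma group_conclusion:
  fixes m :: nat and R :: "letter list set"
  assumes m: "m \<ge> 1" and gen: "\<And>x. x \<in> letters m \<Longrightarrow> ([x], [(0, False)]) \<in> E R"
  shows "presented_group m R \<cong> singleton_group () \<or> presented_group m R \<cong> Z2_group"
proof -
  define a0 :: letter where "a0 = (0, False)"
  define L where "L = lists (letters m)"
  define \<rho> where "\<rho> = pres_rel m R"
  have a0: "a0 \<in> letters m" using m by (simp add: a0_def letters_def)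
  have ia0: "inv_letter a0 \<in> letters m" using m by (simp add: a0_def letters_def inv_letter_def)
  have gen': "\<And>x. x \<in> letters m \<Longrightarrow> ([x], [a0]) \<in> E R" using gen a0_def by simp
  have "([a0, a0], [a0, inv_letter a0]) \<in> E R"
    using E_app_left[OF E_sym[OF gen'[OF ia0]], of "[a0]"] by simp
  then have sq: "([a0, a0], []) \<in> E R" using E_cancel_pair E_sym E_trans by metis
  define C0 where "C0 = \<rho> `` {[]}"
  define C1 where "C1 = \<rho> `` {[a0]}"
  have Lnil: "[] \<in> L" and La0: "[a0] \<in> L" "[a0, a0] \<in> L" using a0 by (auto simp: L_def)
  have carr: "carrier (presented_group m R) = {C0, C1}"
  proof
    show "carrier (presented_group m R) \<subseteq> {C0, C1}"
    proof
      fix C assume "C \<in> carrier (presented_group m R)"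
      then have "C \<in> L // \<rho>" by (simp add: presented_group_def L_def \<rho>_def)
      then obtain w where w: "w \<in> L" "C = \<rho> `` {w}" by (rule quotientE)
      from all_words[OF a0 gen' sq] w(1) have "(w, []) \<in> E R \<or> (w, [a0]) \<in> E R"
        unfolding L_def by blast
      then show "C \<in> {C0, C1}" using cls_eqI w Lnil La0 unfolding C0_def C1_def \<rho>_def L_def by blast
    qed
    show "{C0, C1} \<subseteq> carrier (presented_group m R)"
      using Lnil La0 unfolding presented_group_def C0_def C1_def \<rho>_def L_def
      by (auto intro: quotientI)
  qed
  have mul: "\<And>u v. u \<in> L \<Longrightarrow> v \<in> L \<Longrightarrow>
     (\<rho> `` {u}) \<otimes>\<^bsub>presented_group m R\<^esub> (\<rho> `` {v}) = \<rho> `` {u @ v}"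
    using cls_mult unfolding L_def \<rho>_def by blast
  show ?thesis
  proof (cases "C0 = C1")
    case True
    have "(\<lambda>_. ()) \<in> Group.iso (presented_group m R) (singleton_group ())"
      unfolding Group.iso_def hom_def using carr True
      by (auto simp: singleton_group_def bij_betw_def inj_on_def)
    then show ?thesis unfolding is_iso_def by blast
  next
    case False
    define h where "h = (\<lambda>C. if C = C0 then (0::int) else 1)"
    have m00: "C0 \<otimes>\<^bsub>presented_group m R\<^esub> C0 = C0"
      using mul[OF Lnil Lnil] unfolding C0_def by simp
    have m01: "C0 \<otimes>\<^bsub>presented_group m R\<^esub> C1 = C1"
      using mul[OF Lnil La0(1)] unfolding C0_def C1_def by simp
    have m10: "C1 \<otimes>\<^bsub>presented_group m R\<^esub> C0 = C1"
      using mul[OF La0(1) Lnil] unfolding C0_def C1_def by simp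
    have m11: "C1 \<otimes>\<^bsub>presented_group m R\<^esub> C1 = C0"
      using mul[OF La0(1) La0(1)] cls_eqI[OF La0(2)[unfolded L_def] Lnil[unfolded L_def] sq]
      unfolding C0_def C1_def \<rho>_def by simp
    have "h \<in> Group.iso (presented_group m R) Z2_group"
      unfolding Group.iso_def hom_def using carr False m00 m01 m10 m11
      by (auto simp: Z2_group_def h_def bij_betw_def inj_on_def)
    then show ?thesis unfolding is_iso_def by blast
  qed
qed


definition tup :: "'a set \<Rightarrow> nat \<Rightarrow> 'a list set" where
  "tup W N = {rs. length rs = N \<and> set rs \<subseteq> W}"

lemma card_tup: "finite W \<Longrightarrow> card (tup W N) = card W ^ N"
  using card_lists_length_eq[of W N] unfolding tup_def by (simp add: conj_commute)

lemma finite_tup: "finite W \<Longrightarrow> finite (tup W N)"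
  unfolding tup_def using finite_lists_length_eq[of W N] by (simp add: conj_commute)

definition fib :: "'a set \<Rightarrow> nat \<Rightarrow> nat list \<Rightarrow> 'a list \<Rightarrow> 'a list set" where
  "fib W N I ws = {rs \<in> tup W N. map (nth rs) I = ws}"

lemma fib_card_eq:
  assumes "finite W" "i < N" "i \<notin> set I" "w \<in> W" "w' \<in> W"
  shows "card (fib W N (i # I) (w # ws)) \<le> card (fib W N (i # I) (w' # ws))"
proof -
  have "inj_on (\<lambda>rs. rs[i := w']) (fib W N (i # I) (w # ws))"
  proof (rule inj_onI)
    fix x y assume x: "x \<in> fib W N (i # I) (w # ws)" and y: "y \<in> fib W N (i # I) (w # ws)"
      and eq: "x[i := w'] = y[i := w']"
    have lx: "length x = N" "length y = N" "x ! i = w" "y ! i = w" using x y by (auto simp: fib_def tup_def)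
    show "x = y"
    proof (rule nth_equalityI)
      show "length x = length y" using lx by simp
      fix j assume "j < length x"
      then show "x ! j = y ! j"
        using lx eq by (cases "j = i") (auto simp: list_eq_iff_nth_eq nth_list_update)
    qed
  qed
  moreover have "(\<lambda>rs. rs[i := w']) ` fib W N (i # I) (w # ws) \<subseteq> fib W N (i # I) (w' # ws)"
  proof
    fix y assume "y \<in> (\<lambda>rs. rs[i := w']) ` fib W N (i # I) (w # ws)"
    then obtain x where x: "x \<in> fib W N (i # I) (w # ws)" "y = x[i := w']" by blast
    have "map ((!) (x[i := w'])) I = map ((!) x) I"
      by (intro map_cong refl) (metis assms(3) nth_list_update_neq)
    moreover have "set (x[i := w']) \<subseteq> W" using x assms set_update_subset_insert[of x i w'] 
      by (auto simp: fib_def tup_def)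
    ultimately show "y \<in> fib W N (i # I) (w' # ws)" using x assms(2) by (auto simp: fib_def tup_def)
  qed
  moreover have "finite (fib W N (i # I) (w' # ws))"
    using finite_tup[OF assms(1)] by (simp add: fib_def)
  ultimately show ?thesis by (meson card_inj_on_le)
qed

lemma card_fib:
  assumes "finite W" "distinct I" "\<forall>i\<in>set I. i < N" "length ws = length I" "set ws \<subseteq> W"
  shows "card (fib W N I ws) = card W ^ (N - length I)"
  using assms(2-5)
proof (induction I arbitrary: ws)
  case Nil
  then show ?case by (simp add: fib_def card_tup[OF assms(1)])
next
  case (Cons i I)
  obtain w ws' where ws: "ws = w # ws'" using Cons.prems(3) by (cases ws) auto
  have w: "w \<in> W" and ws': "set ws' \<subseteq> W" "length ws' = length I" using Cons.prems ws by auto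
  have iN: "i < N" "i \<notin> set I" using Cons.prems by auto
  have IH: "card (fib W N I ws') = card W ^ (N - length I)" using Cons ws' by auto
  have eqc: "\<And>w'. w' \<in> W \<Longrightarrow> card (fib W N (i # I) (w' # ws')) = card (fib W N (i # I) (w # ws'))"
    using fib_card_eq[OF assms(1) iN] w by (meson le_antisym)
  have un: "fib W N I ws' = (\<Union>w'\<in>W. fib W N (i # I) (w' # ws'))"
    by (auto simp: fib_def tup_def) (use iN in auto)
  have "card (fib W N I ws') = (\<Sum>w'\<in>W. card (fib W N (i # I) (w' # ws')))"
    unfolding un
    by (rule card_UN_disjoint) (auto simp: assms(1) fib_def finite_tup)
  also have "\<dots> = card W * card (fib W N (i # I) (w # ws'))" using eqc by simp
  finally have 1: "card W * card (fib W N (i # I) (w # ws')) = card W ^ (N - length I)" using IH by simp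
  have "card (set (i # I)) \<le> card {..<N}" using Cons.prems by (intro card_mono) auto
  then have "length I < N" using Cons.prems distinct_card[of "i#I"] by simp
  then have "N - length I = Suc (N - length (i # I))" by simp
  then have "card W * card (fib W N (i # I) (w # ws')) = card W * card W ^ (N - length (i # I))"
    using 1 by simp
  moreover have "card W > 0" using w assms(1) card_gt_0_iff by blast
  ultimately show ?case using ws by simp
qed

lemma tup_Suc: "tup W (Suc n) = (\<lambda>(w, ws). w # ws) ` (W \<times> tup W n)"
  unfolding tup_def by (auto simp: length_Suc_conv image_iff)

lemma sum_tup_Suc: "finite W \<Longrightarrow> (\<Sum>ws\<in>tup W (Suc n). g ws) = (\<Sum>w\<in>W. \<Sum>ws\<in>tup W n. g (w # ws))"
  unfolding tup_Suc
  by (subst sum.reindex) (auto simp: inj_on_def sum.cartesian_product finite_tup split_beta)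

lemma tup_0: "tup W 0 = {[]}" unfolding tup_def by auto

lemma sum_fib:
  fixes g :: "'a list \<Rightarrow> real"
  assumes "finite W" "distinct I" "\<forall>i\<in>set I. i < N"
  shows "(\<Sum>rs\<in>tup W N. g (map (nth rs) I)) = real (card W ^ (N - length I)) * (\<Sum>ws\<in>tup W (length I). g ws)"
proof -
  have img: "(\<lambda>rs. map (nth rs) I) ` tup W N \<subseteq> tup W (length I)"
    using assms(3) by (auto simp: tup_def) (meson nth_mem subsetD)
  have "(\<Sum>rs\<in>tup W N. g (map (nth rs) I)) =
        (\<Sum>ws\<in>tup W (length I). \<Sum>rs\<in>{rs \<in> tup W N. map (nth rs) I = ws}. g (map (nth rs) I))"
    by (rule sum.group[symmetric]) (auto simp: finite_tup assms(1) img)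
  also have "\<dots> = (\<Sum>ws\<in>tup W (length I). real (card (fib W N I ws)) * g ws)"
    by (intro sum.cong refl) (simp add: fib_def)
  also have "\<dots> = (\<Sum>ws\<in>tup W (length I). real (card W ^ (N - length I)) * g ws)"
    by (intro sum.cong refl) (subst card_fib, auto simp: assms tup_def)
  finally show ?thesis by (simp add: sum_distrib_left)
qed

lemma sum_fib2:
  fixes g :: "'a \<Rightarrow> 'a \<Rightarrow> real"
  assumes "finite W" "i < N" "j < N" "i \<noteq> j"
  shows "(\<Sum>rs\<in>tup W N. g (rs ! i) (rs ! j)) = real (card W ^ (N - 2)) * (\<Sum>w\<in>W. \<Sum>w'\<in>W. g w w')"
  using sum_fib[OF assms(1), of "[i, j]" N "\<lambda>ws. g (ws ! 0) (ws ! 1)"] assms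
  by (simp add: numeral_2_eq_2 sum_tup_Suc tup_0)

lemma sum_fib3:
  fixes g :: "'a \<Rightarrow> 'a \<Rightarrow> 'a \<Rightarrow> real"
  assumes "finite W" "i < N" "j < N" "k < N" "distinct [i, j, k]"
  shows "(\<Sum>rs\<in>tup W N. g (rs ! i) (rs ! j) (rs ! k)) = real (card W ^ (N - 3)) * (\<Sum>w1\<in>W. \<Sum>w2\<in>W. \<Sum>w3\<in>W. g w1 w2 w3)"
  using sum_fib[OF assms(1) assms(5), of N "\<lambda>ws. g (ws ! 0) (ws ! 1) (ws ! 2)"] assms
  by (simp add: numeral_3_eq_3 sum_tup_Suc tup_0)

lemma sum_fib4:
  fixes g :: "'a \<Rightarrow> 'a \<Rightarrow> 'a \<Rightarrow> 'a \<Rightarrow> real"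
  assumes "finite W" "i < N" "j < N" "k < N" "k' < N" "distinct [i, j, k, k']"
  shows "(\<Sum>rs\<in>tup W N. g (rs ! i) (rs ! j) (rs ! k) (rs ! k')) = real (card W ^ (N - 4)) * (\<Sum>w1\<in>W. \<Sum>w2\<in>W. \<Sum>w3\<in>W. \<Sum>w4\<in>W. g w1 w2 w3 w4)"
  using sum_fib[OF assms(1) assms(6), of N "\<lambda>ws. g (ws ! 0) (ws ! 1) (ws ! 2) (ws ! 3)"] assms
  by (simp add: numeral_eq_Suc sum_tup_Suc tup_0)


definition Y :: "letter \<Rightarrow> letter \<Rightarrow> letter list \<Rightarrow> letter list \<Rightarrow> bool" where
  "Y c d w w' \<longleftrightarrow> (\<exists>u v. w = u @ [c] @ v \<and> w' = u @ [d] @ v)"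

lemma Y_out: "Y c d w w' \<Longrightarrow> w' \<in> (\<lambda>p. w[p := d]) ` {..<length w}"
proof -
  assume "Y c d w w'"
  then obtain u v where uv: "w = u @ [c] @ v" "w' = u @ [d] @ v" unfolding Y_def by blast
  have "w[length u := d] = w'" using uv by (simp add: list_update_append)
  moreover have "length u < length w" using uv by simp
  ultimately show ?thesis by blast
qed

lemma Y_in: "Y c d w w' \<Longrightarrow> w \<in> (\<lambda>p. w'[p := c]) ` {..<length w'}"
proof -
  assume "Y c d w w'"
  then obtain u v where uv: "w = u @ [c] @ v" "w' = u @ [d] @ v" unfolding Y_def by blast
  have "w'[length u := c] = w" using uv by (simp add: list_update_append)
  moreover have "length u < length w'" using uv by simp
  ultimately show ?thesis by blast
qed

lemma Y_out_card: "card {w' \<in> W. Y c d w w'} \<le> length w"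
proof -
  have "card {w' \<in> W. Y c d w w'} \<le> card ((\<lambda>p. w[p := d]) ` {..<length w})"
    by (intro card_mono) (blast dest: Y_out)+
  also have "\<dots> \<le> length w" using card_image_le[of "{..<length w}"] by simp
  finally show ?thesis .
qed

lemma Y_in_card: "card {w \<in> W. Y c d w w'} \<le> length w'"
proof -
  have "card {w \<in> W. Y c d w w'} \<le> card ((\<lambda>p. w'[p := c]) ` {..<length w'})"
    by (intro card_mono) (blast dest: Y_in)+
  also have "\<dots> \<le> length w'" using card_image_le[of "{..<length w'}"] by simp
  finally show ?thesis .
qed

lemma Y_not_sym: "c \<noteq> d \<Longrightarrow> Y c d w w' \<Longrightarrow> \<not> Y c d w' w"
proof
  assume cd: "c \<noteq> d" and a: "Y c d w w'" and b: "Y c d w' w"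
  from a obtain u v where uv: "w = u @ [c] @ v" "w' = u @ [d] @ v" unfolding Y_def by blast
  from b obtain u' v' where uv': "w' = u' @ [c] @ v'" "w = u' @ [d] @ v'" unfolding Y_def by blast
  have "length u = length u'"
  proof (rule ccontr)
    assume ne: "length u \<noteq> length u'"
    have lw: "length w = length w'" using uv by simp
    have "w ! length u = c" "w' ! length u = d" using uv by auto
    moreover have "length u < length w" using uv by simp
    moreover have "\<And>q. q < length w \<Longrightarrow> q \<noteq> length u' \<Longrightarrow> w ! q = w' ! q"
      using uv' by (auto simp: nth_append)
    ultimately show False using ne cd by metis
  qed
  then show False using uv uv' cd by auto
qed

definition Up where "Up m c d p = {u \<in> reduced_words m p. last u \<notin> {inv_letter c, inv_letter d}}"
definition Vp where "Vp m c d n = {v \<in> reduced_words m n. hd v \<notin> {inv_letter c, inv_letter d}}"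

lemma card2: "card {a, b :: letter} \<le> 2" by (simp add: card_insert_if)

lemma Up_card: "m \<ge> 2 \<Longrightarrow> card (Up m c d (Suc n)) \<ge> (2 * m - 1) ^ n"
proof -
  assume m: "m \<ge> 2"
  have "(2 * m - 1 - card {inv_letter c, inv_letter d}) * card (reduced_words m n) \<le> card (Up m c d (Suc n))"
    unfolding Up_def by (rule RW_last_lower) simp
  moreover have "2 * m - 1 - card {inv_letter c, inv_letter d} \<ge> 1" using m card2[of "inv_letter c" "inv_letter d"] by linarith
  ultimately have "card (reduced_words m n) \<le> card (Up m c d (Suc n))"
    by (metis dual_order.trans mult_1 mult_le_mono1)
  then show ?thesis using RW_lower[of m n] by linarith
qed

lemma Vp_card: "m \<ge> 2 \<Longrightarrow> card (Vp m c d (Suc n)) \<ge> (2 * m - 1) ^ n"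
proof -
  assume m: "m \<ge> 2"
  have "(2 * m - 1 - card {inv_letter c, inv_letter d}) * card (reduced_words m n) \<le> card (Vp m c d (Suc n))"
    unfolding Vp_def by (rule RW_hd_lower) simp
  moreover have "2 * m - 1 - card {inv_letter c, inv_letter d} \<ge> 1" using m card2[of "inv_letter c" "inv_letter d"] by linarith
  ultimately have "card (reduced_words m n) \<le> card (Vp m c d (Suc n))"
    by (metis dual_order.trans mult_1 mult_le_mono1)
  then show ?thesis using RW_lower[of m n] by linarith
qed

definition Pairs where "Pairs m l c d = {(w, w'). w \<in> reduced_words m l \<and> w' \<in> reduced_words m l \<and> Y c d w w'}"

lemma Pairs_lower:
  assumes m: "m \<ge> 2" and l: "l \<ge> 3" and cd: "c \<in> letters m" "d \<in> letters m" "c \<noteq> d"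
  shows "card (Pairs m l c d) \<ge> (l - 2) * (2 * m - 1) ^ (l - 3)"
proof -
  define q where "q = 2 * m - 1"
  define F where "F = (\<lambda>(u, v). (u @ [c] @ v, u @ [d] @ v))"
  define Im where "Im p = F ` (Up m c d p \<times> Vp m c d (l - 1 - p))" for p
  have sub: "Im p \<subseteq> Pairs m l c d" if p: "1 \<le> p" "p \<le> l - 2" for p
  proof
    fix x assume "x \<in> Im p"
    then obtain u v where uv: "u \<in> Up m c d p" "v \<in> Vp m c d (l - 1 - p)" "x = F (u, v)"
      unfolding Im_def by auto
    have u: "u \<in> reduced_words m p" "last u \<noteq> inv_letter c" "last u \<noteq> inv_letter d"
      using uv by (auto simp: Up_def)
    have v: "v \<in> reduced_words m (l - 1 - p)" "hd v \<noteq> inv_letter c" "hd v \<noteq> inv_letter d"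
      using uv by (auto simp: Vp_def)
    have une: "u \<noteq> []" using u p by (auto simp: reduced_words_def)
    have fr: "freely_reduced (u @ [e] @ v)" if "e = c \<or> e = d" for e
    proof -
      have "e \<noteq> inv_letter (last u)"
      proof
        assume "e = inv_letter (last u)"
        then have "last u = inv_letter e" by simp
        then show False using u that by auto
      qed
      then have "freely_reduced (u @ [e])" using u une by (simp add: FR_snoc reduced_words_def)
      moreover have "freely_reduced (e # v)" using v that by (auto simp: FR_Cons reduced_words_def)
      ultimately show ?thesis using FR_mid[of u e v] by simp
    qed
    have len: "length (u @ [e] @ v) = l" for e using u(1) v(1) p l by (simp add: reduced_words_def)
    have st: "set (u @ [e] @ v) \<subseteq> letters m" if "e \<in> letters m" for e
      using u(1) v(1) that by (simp add: reduced_words_def)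
    have "u @ [c] @ v \<in> reduced_words m l" unfolding reduced_words_def using len st[OF cd(1)] fr[of c] by blast
    moreover have "u @ [d] @ v \<in> reduced_words m l" unfolding reduced_words_def using len st[OF cd(2)] fr[of d] by blast
    moreover have "Y c d (u @ [c] @ v) (u @ [d] @ v)" unfolding Y_def by blast
    ultimately show "x \<in> Pairs m l c d" using uv(3) unfolding F_def Pairs_def by simp
  qed
  have inj: "inj_on F (Up m c d p \<times> Vp m c d (l - 1 - p))" for p
  proof (rule inj_onI)
    fix x y assume x: "x \<in> Up m c d p \<times> Vp m c d (l - 1 - p)" and y: "y \<in> Up m c d p \<times> Vp m c d (l - 1 - p)"
      and e: "F x = F y"
    obtain u v u' v' where xy: "x = (u, v)" "y = (u', v')" by (cases x, cases y) blast
    have "length u = p" "length u' = p" using x y xy by (simp_all add: Up_def reduced_words_def)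
    moreover have "u @ [c] @ v = u' @ [c] @ v'" using e xy by (simp add: F_def)
    ultimately have "u = u'" "v = v'" by (simp_all add: append_eq_append_conv)
    then show "x = y" using xy by simp
  qed
  have diff: "(fst x) ! p \<noteq> (snd x) ! p \<and> (\<forall>p'. p' \<noteq> p \<longrightarrow> (fst x) ! p' = (snd x) ! p')"
    if "x \<in> Im p" for x p
  proof -
    from that obtain u v where uv: "u \<in> Up m c d p" "x = F (u, v)" unfolding Im_def by auto
    have lu: "length u = p" using uv by (simp add: Up_def reduced_words_def)
    have "(u @ [c] @ v) ! p \<noteq> (u @ [d] @ v) ! p" using cd(3) by (simp add: lu[symmetric])
    moreover have "(u @ [c] @ v) ! p' = (u @ [d] @ v) ! p'" if "p' \<noteq> p" for p'
      using lu that by (simp add: nth_append nth_Cons')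
    ultimately show ?thesis using uv(2) by (simp add: F_def)
  qed
  have disj: "Im p \<inter> Im p' = {}" if "p \<noteq> p'" for p p'
    using diff that by blast
  have fin: "finite (Pairs m l c d)"
  proof -
    have "Pairs m l c d \<subseteq> reduced_words m l \<times> reduced_words m l" by (auto simp: Pairs_def)
    then show ?thesis by (rule finite_subset) simp
  qed
  have "card (\<Union>p\<in>{1..l-2}. Im p) = (\<Sum>p\<in>{1..l-2}. card (Im p))"
  proof (rule card_UN_disjoint)
    show "\<forall>i\<in>{1..l - 2}. finite (Im i)"
    proof
      fix i assume "i \<in> {1..l - 2}"
      then have "Im i \<subseteq> Pairs m l c d" using sub by simp
      then show "finite (Im i)" using fin by (rule finite_subset)
    qed
  qed (use disj in auto)
  also have "\<dots> = (\<Sum>p\<in>{1..l-2}. card (Up m c d p) * card (Vp m c d (l - 1 - p)))"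
    by (intro sum.cong refl) (simp only: Im_def card_image[OF inj] card_cartesian_product)
  also have "\<dots> \<ge> (\<Sum>p\<in>{1..l-2}. q ^ (l - 3))"
  proof (rule sum_mono)
    fix p assume p: "p \<in> {1..l-2}"
    obtain a where a: "p = Suc a" using p by (cases p) auto
    define b where "b = l - 2 - p"
    have b: "l - 1 - p = Suc b" using p l unfolding b_def by auto
    have "q ^ a \<le> card (Up m c d p)" using Up_card[OF m] a q_def by simp
    moreover have "q ^ b \<le> card (Vp m c d (l - 1 - p))" using Vp_card[OF m] b q_def by simp
    ultimately have "q ^ a * q ^ b \<le> card (Up m c d p) * card (Vp m c d (l - 1 - p))"
      by (rule mult_le_mono)
    moreover have "a + b = l - 3" using a b p l by simp
    ultimately show "q ^ (l - 3) \<le> card (Up m c d p) * card (Vp m c d (l - 1 - p))"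
      by (metis power_add)
  qed
  finally have "(l - 2) * q ^ (l - 3) \<le> card (\<Union>p\<in>{1..l-2}. Im p)" by simp
  also have "\<dots> \<le> card (Pairs m l c d)"
  proof (rule card_mono[OF fin])
    show "(\<Union>p\<in>{1..l-2}. Im p) \<subseteq> Pairs m l c d"
    proof (rule UN_least)
      fix p assume "p \<in> {1..l-2}"
      then show "Im p \<subseteq> Pairs m l c d" using sub by simp
    qed
  qed
  finally show ?thesis unfolding q_def .
qed


lemma quad_bound:
  fixes W :: "'a set" and Yb :: "'a \<Rightarrow> 'a \<Rightarrow> bool"
  defines "y \<equiv> \<lambda>w w'. (if Yb w w' then 1 else 0 :: real)"
  defines "T \<equiv> (\<Sum>w\<in>W. \<Sum>w'\<in>W. y w w')"
  defines "K \<equiv> real (card W)"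
  assumes fin: "finite W"
    and outd: "\<And>w. w \<in> W \<Longrightarrow> (\<Sum>w'\<in>W. y w w') \<le> L"
    and ind: "\<And>w'. w' \<in> W \<Longrightarrow> (\<Sum>w\<in>W. y w w') \<le> L"
    and idx: "i < N" "j < N" "i' < N" "j' < N" "i \<noteq> j" "i \<noteq> j'" "i' \<noteq> j" "i' \<noteq> j'"
  shows "(\<Sum>rs\<in>tup W N. y (rs ! i) (rs ! j) * y (rs ! i') (rs ! j'))
     \<le> (if i = i' \<and> j = j' then K ^ (N - 2) * T else 0)
       + (if i = i' \<or> j = j' then K ^ (N - 3) * L * T else 0) + K ^ (N - 4) * T\<^sup>2"
proof -
  have y01: "y a b * y a b = y a b" for a b by (simp add: y_def)
  have ynn: "y a b \<ge> 0" for a b by (simp add: y_def)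
  have Tnn: "T \<ge> 0" unfolding T_def by (intro sum_nonneg) (simp add: ynn)
  have Knn: "K \<ge> 0" by (simp add: K_def)
  have deg2: "(\<Sum>w1\<in>W. (\<Sum>w2\<in>W. y w1 w2) * (\<Sum>w3\<in>W. y w1 w3)) \<le> L * T"
  proof -
    have "(\<Sum>w1\<in>W. (\<Sum>w2\<in>W. y w1 w2) * (\<Sum>w3\<in>W. y w1 w3)) \<le> (\<Sum>w1\<in>W. L * (\<Sum>w3\<in>W. y w1 w3))"
      by (intro sum_mono mult_right_mono outd) (auto intro: sum_nonneg ynn)
    then show ?thesis by (simp add: T_def sum_distrib_left)
  qed
  have deg2': "(\<Sum>w3\<in>W. (\<Sum>w1\<in>W. y w1 w3) * (\<Sum>w2\<in>W. y w2 w3)) \<le> L * T"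
  proof -
    have sw: "(\<Sum>w3\<in>W. \<Sum>w2\<in>W. y w2 w3) = T" unfolding T_def by (rule sum.swap)
    have "(\<Sum>w3\<in>W. (\<Sum>w1\<in>W. y w1 w3) * (\<Sum>w2\<in>W. y w2 w3)) \<le> (\<Sum>w3\<in>W. L * (\<Sum>w2\<in>W. y w2 w3))"
      by (intro sum_mono mult_right_mono ind) (auto intro: sum_nonneg ynn)
    also have "\<dots> = L * (\<Sum>w3\<in>W. \<Sum>w2\<in>W. y w2 w3)" by (simp add: sum_distrib_left)
    finally show ?thesis using sw by simp
  qed
  have t1: "0 \<le> (if i = i' \<and> j = j' then K ^ (N - 2) * T else 0)" using Tnn Knn by simp
  have L0: "L \<ge> 0" if ne: "W \<noteq> {}"
  proof -
    obtain w where "w \<in> W" using ne by blast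
    then show ?thesis using outd[of w] sum_nonneg[of W "y w"] ynn by fastforce
  qed
  have t2: "0 \<le> (if i = i' \<or> j = j' then K ^ (N - 3) * L * T else 0)"
  proof (cases "W = {}")
    case True then show ?thesis by (simp add: T_def)
  next
    case False then show ?thesis using L0 Tnn Knn by simp
  qed
  have t3: "0 \<le> K ^ (N - 4) * T\<^sup>2" using Knn by simp
  show ?thesis
  proof (cases "i = i'")
    case ii: True
    show ?thesis
    proof (cases "j = j'")
      case True
      have "(\<Sum>rs\<in>tup W N. y (rs ! i) (rs ! j) * y (rs ! i') (rs ! j')) = (\<Sum>rs\<in>tup W N. y (rs ! i) (rs ! j))"
        by (simp only: ii True y01)
      also have "\<dots> = K ^ (N - 2) * T"
        using sum_fib2[OF fin idx(1,2,5), of y] by (simp add: T_def K_def)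
      finally show ?thesis using ii True t2 t3 by simp
    next
      case False
      have "(\<Sum>rs\<in>tup W N. y (rs ! i) (rs ! j) * y (rs ! i') (rs ! j'))
          = K ^ (N - 3) * (\<Sum>w1\<in>W. \<Sum>w2\<in>W. \<Sum>w3\<in>W. y w1 w2 * y w1 w3)"
        using sum_fib3[OF fin idx(1,2,4), of "\<lambda>a b c. y a b * y a c"] ii False idx by (simp add: K_def)
      also have "(\<Sum>w1\<in>W. \<Sum>w2\<in>W. \<Sum>w3\<in>W. y w1 w2 * y w1 w3) = (\<Sum>w1\<in>W. (\<Sum>w2\<in>W. y w1 w2) * (\<Sum>w3\<in>W. y w1 w3))"
        by (simp add: sum_product)
      finally have "(\<Sum>rs\<in>tup W N. y (rs ! i) (rs ! j) * y (rs ! i') (rs ! j')) \<le> K ^ (N - 3) * (L * T)"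
        using deg2 Knn by (simp add: mult_left_mono)
      then show ?thesis using ii False t1 t3 by (simp add: mult.assoc)
    qed
  next
    case ii: False
    show ?thesis
    proof (cases "j = j'")
      case True
      have "(\<Sum>rs\<in>tup W N. y (rs ! i) (rs ! j) * y (rs ! i') (rs ! j'))
          = K ^ (N - 3) * (\<Sum>w1\<in>W. \<Sum>w2\<in>W. \<Sum>w3\<in>W. y w1 w3 * y w2 w3)"
        using sum_fib3[OF fin idx(1,3,2), of "\<lambda>a b c. y a c * y b c"] ii True idx by (simp add: K_def)
      also have "(\<Sum>w1\<in>W. \<Sum>w2\<in>W. \<Sum>w3\<in>W. y w1 w3 * y w2 w3) = (\<Sum>w3\<in>W. (\<Sum>w1\<in>W. y w1 w3) * (\<Sum>w2\<in>W. y w2 w3))"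
      proof -
        have "(\<Sum>w1\<in>W. \<Sum>w2\<in>W. \<Sum>w3\<in>W. y w1 w3 * y w2 w3) = (\<Sum>w1\<in>W. \<Sum>w3\<in>W. \<Sum>w2\<in>W. y w1 w3 * y w2 w3)"
          by (rule sum.cong[OF refl]) (rule sum.swap)
        also have "\<dots> = (\<Sum>w3\<in>W. \<Sum>w1\<in>W. \<Sum>w2\<in>W. y w1 w3 * y w2 w3)" by (rule sum.swap)
        also have "\<dots> = (\<Sum>w3\<in>W. (\<Sum>w1\<in>W. y w1 w3) * (\<Sum>w2\<in>W. y w2 w3))"
          by (simp add: sum_product)
        finally show ?thesis .
      qed
      finally have "(\<Sum>rs\<in>tup W N. y (rs ! i) (rs ! j) * y (rs ! i') (rs ! j')) \<le> K ^ (N - 3) * (L * T)"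
        using deg2' Knn by (simp add: mult_left_mono)
      then show ?thesis using ii True t1 t3 by (simp add: mult.assoc)
    next
      case False
      have "(\<Sum>rs\<in>tup W N. y (rs ! i) (rs ! j) * y (rs ! i') (rs ! j'))
          = K ^ (N - 4) * (\<Sum>w1\<in>W. \<Sum>w2\<in>W. \<Sum>w3\<in>W. \<Sum>w4\<in>W. y w1 w2 * y w3 w4)"
        using sum_fib4[OF fin idx(1,2,3,4), of "\<lambda>a b c d. y a b * y c d"] ii False idx by (simp add: K_def)
      also have "(\<Sum>w1\<in>W. \<Sum>w2\<in>W. \<Sum>w3\<in>W. \<Sum>w4\<in>W. y w1 w2 * y w3 w4) = T\<^sup>2"
      proof -
        have e: "a * T = (\<Sum>w3\<in>W. \<Sum>w4\<in>W. a * y w3 w4)" for a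
          unfolding T_def by (simp add: sum_distrib_left)
        have "T\<^sup>2 = (\<Sum>w1\<in>W. \<Sum>w2\<in>W. y w1 w2) * T" unfolding power2_eq_square by (subst (1) T_def) simp
        also have "\<dots> = (\<Sum>w1\<in>W. \<Sum>w2\<in>W. y w1 w2 * T)" by (simp only: sum_distrib_right)
        also have "\<dots> = (\<Sum>w1\<in>W. \<Sum>w2\<in>W. \<Sum>w3\<in>W. \<Sum>w4\<in>W. y w1 w2 * y w3 w4)" by (simp only: e)
        finally show ?thesis by simp
      qed
      finally show ?thesis using ii False t1 t2 by simp
    qed
  qed
qed


lemma final_alg:
  fixes F K h g T L N Z S1 S2 Om bad :: real
  assumes pos: "F > 0" "K > 0" "h > 0" "g > 0" "T > 0" "L \<ge> 0" "N \<ge> 0" and Z0: "Z \<ge> 0"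
    and S1: "S1 = h * g * (F * K\<^sup>2) * T"
    and S2: "S2 \<le> F * (h * g * K\<^sup>2 * T + h * g * N * K * L * T + (h * g)\<^sup>2 * T\<^sup>2)"
    and CS: "S1\<^sup>2 \<le> Z * S2"
    and Om: "Om = F * K ^ 4"
    and bad: "bad \<le> Om - Z"
  shows "bad \<le> (K\<^sup>2 + N * K * L) / (h * g * T) * Om"
proof -
  define A where "A = h * g * K\<^sup>2 * T + h * g * N * K * L * T"
  define B where "B = (h * g)\<^sup>2 * T\<^sup>2"
  define D where "D = A + B"
  have Anneg: "A \<ge> 0" unfolding A_def using pos by simp
  have Bpos: "B > 0" unfolding B_def using pos by simp
  have Dpos: "D > 0" unfolding D_def using Anneg Bpos by simp
  have "S1\<^sup>2 \<le> Z * (F * D)" using CS S2 Z0 unfolding D_def A_def B_def by (meson mult_left_mono order_trans)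
  then have Zlow: "S1\<^sup>2 / (F * D) \<le> Z" using Dpos pos by (simp add: divide_le_eq mult.commute)
  have S1sq: "S1\<^sup>2 = (F * K ^ 4) * F * B"
    unfolding S1 B_def by (simp add: power2_eq_square power4_eq_xxxx)
  have "S1\<^sup>2 / (F * D) = Om * (B / D)"
    unfolding S1sq Om using pos Dpos by simp
  then have "bad \<le> Om - Om * (B / D)" using bad Zlow by linarith
  also have "Om - Om * (B / D) = Om * (A / D)"
  proof -
    have "A / D + B / D = 1" using Dpos unfolding D_def by (simp add: add_divide_distrib[symmetric])
    then have "B / D = 1 - A / D" by linarith
    then show ?thesis by (simp add: right_diff_distrib)
  qed
  also have "Om * (A / D) \<le> Om * (A / B)"
  proof (rule mult_left_mono)
    show "A / D \<le> A / B" using Anneg Bpos unfolding D_def by (intro divide_left_mono) auto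
    show "0 \<le> Om" using Om pos by simp
  qed
  also have "A / B = (K\<^sup>2 + N * K * L) / (h * g * T)"
  proof -
    have "A = (h * g * T) * (K\<^sup>2 + N * K * L)" unfolding A_def by (simp add: algebra_simps)
    moreover have "B = (h * g * T) * (h * g * T)" unfolding B_def by (simp add: power2_eq_square)
    moreover have "h * g * T \<noteq> 0" using pos by simp
    ultimately show ?thesis by simp
  qed
  finally show ?thesis by (simp add: mult.commute)
qed

lemma second_moment:
  fixes W :: "'a set" and Yb :: "'a \<Rightarrow> 'a \<Rightarrow> bool"
  defines "y \<equiv> \<lambda>w w'. (if Yb w w' then 1 else 0 :: real)"
  defines "T \<equiv> (\<Sum>w\<in>W. \<Sum>w'\<in>W. y w w')"
  defines "K \<equiv> real (card W)"
  assumes fin: "finite W"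
    and outd: "\<And>w. w \<in> W \<Longrightarrow> (\<Sum>w'\<in>W. y w w') \<le> L"
    and ind: "\<And>w'. w' \<in> W \<Longrightarrow> (\<Sum>w\<in>W. y w w') \<le> L"
    and N4: "N \<ge> 4" and Tpos: "T > 0"
  shows "real (card {rs \<in> tup W N. \<not> (\<exists>i<N. \<exists>j<N. Yb (rs ! i) (rs ! j))})
     \<le> (K\<^sup>2 + real N * K * L) / (real (N div 2) * real (N - N div 2) * T) * real (card (tup W N))"
proof -
  define h where "h = N div 2"
  define g where "g = N - h"
  define Ix where "Ix = {..<h} \<times> {h..<N}"
  define Xs where "Xs rs = (\<Sum>p\<in>Ix. y (rs ! fst p) (rs ! snd p))" for rs
  define Omg where "Omg = tup W N"
  define F where "F = K ^ (N - 4)"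
  have fI: "finite Ix" unfolding Ix_def by simp
  have cI: "card Ix = h * g" unfolding Ix_def g_def by (simp add: card_cartesian_product)
  have fO: "finite Omg" unfolding Omg_def using fin by (rule finite_tup)
  have ynn: "y a b \<ge> 0" for a b by (simp add: y_def)
  have Wne: "W \<noteq> {}" using Tpos unfolding T_def by auto
  have Kpos: "K > 0" unfolding K_def using fin Wne by (simp add: card_gt_0_iff)
  have L0: "L \<ge> 0"
  proof -
    obtain w where "w \<in> W" using Wne by blast
    then show ?thesis using outd[of w] sum_nonneg[of W "y w"] ynn by fastforce
  qed
  have hpos: "h > 0" "g > 0" using N4 unfolding h_def g_def by auto
  have Iidx: "fst p < N" "snd p < N" "fst p \<noteq> snd p" if "p \<in> Ix" for p
    using that N4 unfolding Ix_def h_def by auto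
  have KN: "K ^ (N - 2) = F * K\<^sup>2" "K ^ (N - 3) = F * K" "K ^ N = F * K ^ 4"
  proof -
    obtain M where M: "N = M + 4" using N4 by (metis add.commute le_add_diff_inverse)
    show "K ^ (N - 2) = F * K\<^sup>2" "K ^ (N - 3) = F * K" "K ^ N = F * K ^ 4"
      unfolding F_def M by (simp_all add: power_add power2_eq_square)
  qed
  have S1: "(\<Sum>rs\<in>Omg. Xs rs) = real (h * g) * (F * K\<^sup>2) * T"
  proof -
    have "(\<Sum>rs\<in>Omg. Xs rs) = (\<Sum>p\<in>Ix. \<Sum>rs\<in>Omg. y (rs ! fst p) (rs ! snd p))"
      unfolding Xs_def by (rule sum.swap)
    also have "\<dots> = (\<Sum>p\<in>Ix. K ^ (N - 2) * T)"
      by (intro sum.cong refl) (use Iidx in \<open>simp add: Omg_def sum_fib2[OF fin] T_def K_def\<close>)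
    finally show ?thesis using cI KN by simp
  qed
  define B1 where "B1 = K ^ (N - 2) * T"
  define B2 where "B2 = K ^ (N - 3) * L * T"
  define B3 where "B3 = K ^ (N - 4) * T\<^sup>2"
  have B2nn: "B2 \<ge> 0" unfolding B2_def using Kpos L0 Tpos by simp
  have Q: "(\<Sum>rs\<in>Omg. y (rs ! fst p) (rs ! snd p) * y (rs ! fst p') (rs ! snd p'))
      \<le> B1 * of_bool (p = p') + B2 * (of_bool (fst p = fst p') + of_bool (snd p = snd p')) + B3"
    if "p \<in> Ix" "p' \<in> Ix" for p p'
  proof -
    have i: "fst p < N" "snd p < N" "fst p' < N" "snd p' < N" using that Iidx by auto
    have ne: "fst p \<noteq> snd p" "fst p \<noteq> snd p'" "fst p' \<noteq> snd p" "fst p' \<noteq> snd p'"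
      using that unfolding Ix_def by auto
    have "(\<Sum>rs\<in>Omg. y (rs ! fst p) (rs ! snd p) * y (rs ! fst p') (rs ! snd p'))
      \<le> (if fst p = fst p' \<and> snd p = snd p' then K ^ (N - 2) * T else 0)
       + (if fst p = fst p' \<or> snd p = snd p' then K ^ (N - 3) * L * T else 0) + K ^ (N - 4) * T\<^sup>2"
      unfolding Omg_def y_def T_def K_def
      by (rule quad_bound[OF fin _ _ i ne]) (use outd ind in \<open>auto simp: y_def\<close>)
    also have "(if fst p = fst p' \<and> snd p = snd p' then K ^ (N - 2) * T else 0) = B1 * of_bool (p = p')"
      unfolding B1_def by (cases p, cases p') auto
    also have "(if fst p = fst p' \<or> snd p = snd p' then K ^ (N - 3) * L * T else 0)
       \<le> B2 * (of_bool (fst p = fst p') + of_bool (snd p = snd p'))"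
      unfolding B2_def[symmetric] using B2nn by auto
    finally show ?thesis unfolding B3_def by simp
  qed
  have sumd1: "(\<Sum>p'\<in>Ix. of_bool (p = p') :: real) = 1" if "p \<in> Ix" for p
    using that fI by (simp add: sum.delta)
  have sumd2: "(\<Sum>p'\<in>Ix. of_bool (fst p = fst p') :: real) = real g" if "p \<in> Ix" for p
  proof -
    have "(\<Sum>p'\<in>Ix. of_bool (fst p = fst p') :: real) = (\<Sum>a<h. \<Sum>b\<in>{h..<N}. of_bool (fst p = a))"
      unfolding Ix_def by (simp only: sum.cartesian_product) (rule sum.cong, auto)
    also have "\<dots> = (\<Sum>a<h. of_bool (fst p = a) * real g)" by (simp add: g_def)
    also have "\<dots> = real g"
    proof -
      have "fst p < h" using that unfolding Ix_def by auto
      then have "{..<h} \<inter> {fst p} = {fst p}" by auto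
      then show ?thesis by (simp add: sum_distrib_right[symmetric])
    qed
    finally show ?thesis .
  qed
  have sumd3: "(\<Sum>p'\<in>Ix. of_bool (snd p = snd p') :: real) = real h" if "p \<in> Ix" for p
  proof -
    have "(\<Sum>p'\<in>Ix. of_bool (snd p = snd p') :: real) = (\<Sum>a<h. \<Sum>b\<in>{h..<N}. of_bool (snd p = b))"
      unfolding Ix_def by (simp only: sum.cartesian_product) (rule sum.cong, auto)
    also have "\<dots> = (\<Sum>a<h. 1)"
    proof -
      have "snd p \<in> {h..<N}" using that unfolding Ix_def by auto
      then have "{h..<N} \<inter> {snd p} = {snd p}" by auto
      then show ?thesis by simp
    qed
    also have "\<dots> = real h" by simp
    finally show ?thesis .
  qed
  have S2: "(\<Sum>rs\<in>Omg. (Xs rs)\<^sup>2) \<le> F * (real h * real g * K\<^sup>2 * T + real h * real g * real N * K * L * T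
          + (real h * real g)\<^sup>2 * T\<^sup>2)"
  proof -
    have "(\<Sum>rs\<in>Omg. (Xs rs)\<^sup>2) = (\<Sum>rs\<in>Omg. \<Sum>p\<in>Ix. \<Sum>p'\<in>Ix. y (rs ! fst p) (rs ! snd p) * y (rs ! fst p') (rs ! snd p'))"
      unfolding Xs_def power2_eq_square by (simp add: sum_product)
    also have "\<dots> = (\<Sum>p\<in>Ix. \<Sum>rs\<in>Omg. \<Sum>p'\<in>Ix. y (rs ! fst p) (rs ! snd p) * y (rs ! fst p') (rs ! snd p'))"
      by (rule sum.swap)
    also have "\<dots> = (\<Sum>p\<in>Ix. \<Sum>p'\<in>Ix. \<Sum>rs\<in>Omg. y (rs ! fst p) (rs ! snd p) * y (rs ! fst p') (rs ! snd p'))"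
      by (rule sum.cong[OF refl]) (rule sum.swap)
    also have "\<dots> \<le> (\<Sum>p\<in>Ix. \<Sum>p'\<in>Ix. B1 * of_bool (p = p') + B2 * (of_bool (fst p = fst p') + of_bool (snd p = snd p')) + B3)"
      by (intro sum_mono Q)
    also have "\<dots> = (\<Sum>p\<in>Ix. B1 + B2 * (real g + real h) + B3 * real (h * g))"
    proof (rule sum.cong[OF refl])
      fix p assume p: "p \<in> Ix"
      have "(\<Sum>p'\<in>Ix. B1 * of_bool (p = p') + B2 * (of_bool (fst p = fst p') + of_bool (snd p = snd p')) + B3)
          = B1 * (\<Sum>p'\<in>Ix. of_bool (p = p')) + B2 * ((\<Sum>p'\<in>Ix. of_bool (fst p = fst p')) + (\<Sum>p'\<in>Ix. of_bool (snd p = snd p'))) + B3 * real (card Ix)"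
        by (simp add: sum.distrib sum_distrib_left[symmetric] distrib_left[symmetric])
      also have "\<dots> = B1 + B2 * (real g + real h) + B3 * real (h * g)"
        using sumd1[OF p] sumd2[OF p] sumd3[OF p] cI by simp
      finally show "(\<Sum>p'\<in>Ix. B1 * of_bool (p = p') + B2 * (of_bool (fst p = fst p') + of_bool (snd p = snd p')) + B3)
          = B1 + B2 * (real g + real h) + B3 * real (h * g)" .
    qed
    also have "\<dots> = real (h * g) * (B1 + B2 * (real g + real h) + B3 * real (h * g))"
      using cI by simp
    also have "\<dots> = F * (real h * real g * K\<^sup>2 * T + real h * real g * real N * K * L * T
          + (real h * real g)\<^sup>2 * T\<^sup>2)"
    proof -
      have gh: "real g + real h = real N" unfolding g_def h_def by simp
      have "real (h * g) * (B1 + B2 * (real g + real h) + B3 * real (h * g))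
         = real h * real g * (F * K\<^sup>2 * T + F * K * L * T * real N + F * T\<^sup>2 * (real h * real g))"
        unfolding B1_def B2_def B3_def KN gh F_def[symmetric] by simp
      also have "\<dots> = F * (real h * real g * K\<^sup>2 * T + real h * real g * real N * K * L * T
          + (real h * real g)\<^sup>2 * T\<^sup>2)"
        by (simp only: ring_distribs mult_ac power2_eq_square)
      finally show ?thesis .
    qed
    finally show ?thesis .
  qed
  define Z where "Z = real (card {rs \<in> Omg. Xs rs \<noteq> 0})"
  have CS: "(\<Sum>rs\<in>Omg. Xs rs)\<^sup>2 \<le> Z * (\<Sum>rs\<in>Omg. (Xs rs)\<^sup>2)"
  proof -
    have "(\<Sum>rs\<in>Omg. Xs rs) = (\<Sum>rs\<in>Omg. of_bool (Xs rs \<noteq> 0) * Xs rs)"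
      by (intro sum.cong refl) auto
    then have "(\<Sum>rs\<in>Omg. Xs rs)\<^sup>2 \<le> (\<Sum>rs\<in>Omg. (of_bool (Xs rs \<noteq> 0))\<^sup>2) * (\<Sum>rs\<in>Omg. (Xs rs)\<^sup>2)"
      using Cauchy_Schwarz_ineq_sum[of "\<lambda>rs. of_bool (Xs rs \<noteq> 0) :: real" Xs Omg] by simp
    moreover have "(\<Sum>rs\<in>Omg. (of_bool (Xs rs \<noteq> 0) :: real)\<^sup>2) = Z"
    proof -
      have "(\<Sum>rs\<in>Omg. (of_bool (Xs rs \<noteq> 0) :: real)\<^sup>2) = (\<Sum>rs\<in>Omg. of_bool (Xs rs \<noteq> 0))"
        by (intro sum.cong refl) simp
      also have "\<dots> = Z" unfolding Z_def using fO by (simp add: sum_of_bool_eq Int_def conj_commute)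
      finally show ?thesis .
    qed
    ultimately show ?thesis by simp
  qed
  have badsub: "{rs \<in> Omg. \<not> (\<exists>i<N. \<exists>j<N. Yb (rs ! i) (rs ! j))} \<subseteq> {rs \<in> Omg. Xs rs = 0}"
  proof
    fix rs assume rs: "rs \<in> {rs \<in> Omg. \<not> (\<exists>i<N. \<exists>j<N. Yb (rs ! i) (rs ! j))}"
    have "Xs rs = 0" unfolding Xs_def
    proof (rule sum.neutral, rule ballI)
      fix p assume "p \<in> Ix"
      then show "y (rs ! fst p) (rs ! snd p) = 0" using rs Iidx unfolding y_def by auto
    qed
    then show "rs \<in> {rs \<in> Omg. Xs rs = 0}" using rs by simp
  qed
  have un: "{rs \<in> Omg. Xs rs = 0} \<union> {rs \<in> Omg. Xs rs \<noteq> 0} = Omg" by auto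
  have "card ({rs \<in> Omg. Xs rs = 0} \<union> {rs \<in> Omg. Xs rs \<noteq> 0}) = card {rs \<in> Omg. Xs rs = 0} + card {rs \<in> Omg. Xs rs \<noteq> 0}"
    by (rule card_Un_disjoint) (use fO in auto)
  then have cc: "real (card {rs \<in> Omg. Xs rs = 0}) = real (card Omg) - Z"
    unfolding un Z_def by simp
  have "card {rs \<in> Omg. \<not> (\<exists>i<N. \<exists>j<N. Yb (rs ! i) (rs ! j))} \<le> card {rs \<in> Omg. Xs rs = 0}"
    by (rule card_mono[OF _ badsub]) (use fO in simp)
  then have bad: "real (card {rs \<in> Omg. \<not> (\<exists>i<N. \<exists>j<N. Yb (rs ! i) (rs ! j))}) \<le> real (card Omg) - Z"
    using cc by linarith
  have Om: "real (card Omg) = F * K ^ 4" unfolding Omg_def using card_tup[OF fin] KN K_def by simp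
  have "real (card {rs \<in> Omg. \<not> (\<exists>i<N. \<exists>j<N. Yb (rs ! i) (rs ! j))})
     \<le> (K\<^sup>2 + real N * K * L) / (real h * real g * T) * real (card Omg)"
  proof (rule final_alg[OF _ Kpos _ _ Tpos L0 _ _ _ S2 CS Om bad])
    show "F > 0" unfolding F_def using Kpos by simp
  qed (use hpos S1 Z_def in auto)
  then show ?thesis unfolding Omg_def h_def g_def by simp
qed


lemma Y_sum_card: "(\<Sum>w'\<in>W. (if Y c d w w' then 1 else 0 :: real)) = real (card {w' \<in> W. Y c d w w'})"
  if "finite W" for W
  using that by (simp add: of_bool_def[symmetric] sum_of_bool_eq Int_def conj_commute)

lemma Y_sum_card': "(\<Sum>w\<in>W. (if Y c d w w' then 1 else 0 :: real)) = real (card {w \<in> W. Y c d w w'})"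
  if "finite W" for W
  using that by (simp add: of_bool_def[symmetric] sum_of_bool_eq Int_def conj_commute)

lemma T_eq: "(\<Sum>w\<in>reduced_words m l. \<Sum>w'\<in>reduced_words m l. (if Y c d w w' then 1 else 0 :: real))
   = real (card (Pairs m l c d))"
proof -
  have "Pairs m l c d = Sigma (reduced_words m l) (\<lambda>w. {w' \<in> reduced_words m l. Y c d w w'})"
    unfolding Pairs_def by auto
  then have "card (Pairs m l c d) = (\<Sum>w\<in>reduced_words m l. card {w' \<in> reduced_words m l. Y c d w w'})"
    by (simp add: card_SigmaI)
  then show ?thesis by (simp add: Y_sum_card)
qed

lemma aux_field:
  fixes n Lm Q q ql l :: real
  assumes "n > 0" "Lm > 0" "Q > 0"
  shows "(4 * (ql * q ^ 3 * Q) + 2 * n * l * (q ^ 3 * Q)) / (n\<^sup>2 / 8 * (Lm * Q))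
       = 32 * q ^ 3 * ql / (n\<^sup>2 * Lm) + 16 * q ^ 3 * l / (n * Lm)"
  using assms by (simp add: field_simps power2_eq_square)

lemma bad_bound:
  fixes m l N :: nat and c d :: letter
  defines "q \<equiv> real (2 * m - 1)"
  assumes m: "m \<ge> 2" and l: "l \<ge> 3" and cd: "c \<in> letters m" "d \<in> letters m" "c \<noteq> d" and N4: "N \<ge> 4"
  shows "real (card {rs \<in> tup (reduced_words m l) N. \<not> (\<exists>i<N. \<exists>j<N. Y c d (rs ! i) (rs ! j))})
     \<le> (32 * q ^ 3 * q ^ l / ((real N)\<^sup>2 * (real l - 2)) + 16 * q ^ 3 * real l / (real N * (real l - 2)))
        * real (card (tup (reduced_words m l) N))"
proof -
  define W where "W = reduced_words m l"
  define K where "K = real (card W)"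
  define T where "T = real (card (Pairs m l c d))"
  define h where "h = real (N div 2)"
  define g where "g = real (N - N div 2)"
  define Om where "Om = real (card (tup W N))"
  have q3: "q \<ge> 3" unfolding q_def using m by simp
  have Tlow: "T \<ge> (real l - 2) * q ^ (l - 3)"
  proof -
    have "real ((l - 2) * (2 * m - 1) ^ (l - 3)) \<le> T" unfolding T_def using Pairs_lower[OF m l cd] by linarith
    then show ?thesis using l m by (simp add: q_def of_nat_diff)
  qed
  have Tpos: "T > 0"
  proof -
    have "(real l - 2) * q ^ (l - 3) > 0" using l q3 by simp
    then show ?thesis using Tlow by linarith
  qed
  have Kup: "K \<le> 2 * q ^ l"
  proof -
    have "card W \<le> 2 * (2 * m - 1) ^ l" unfolding W_def using RW_upper[of m l] m by simp
    then have "real (card W) \<le> real (2 * (2 * m - 1) ^ l)" by linarith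
    then show ?thesis unfolding K_def q_def using m by (simp add: of_nat_diff)
  qed
  have K0: "K \<ge> 0" unfolding K_def by simp
  have Teq: "(\<Sum>w\<in>W. \<Sum>w'\<in>W. if Y c d w w' then 1 else 0) = T"
    unfolding W_def T_def by (rule T_eq)
  have finW: "finite W" unfolding W_def by simp
  have outd: "(\<Sum>w'\<in>W. if Y c d w w' then 1 else 0) \<le> real l" if w: "w \<in> W" for w
  proof -
    have lw: "length w = l" using w by (simp add: W_def reduced_words_def)
    show ?thesis using Y_out_card[of W c d w] lw finW by (simp add: Y_sum_card)
  qed
  have ind: "(\<Sum>w\<in>W. if Y c d w w' then 1 else 0) \<le> real l" if w: "w' \<in> W" for w'
  proof -
    have lw: "length w' = l" using w by (simp add: W_def reduced_words_def)
    show ?thesis using Y_in_card[of W c d w'] lw finW by (simp add: Y_sum_card')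
  qed
  have Tpos': "(\<Sum>w\<in>W. \<Sum>w'\<in>W. if Y c d w w' then 1 else 0) > (0::real)" using Teq Tpos by simp
  have main: "real (card {rs \<in> tup W N. \<not> (\<exists>i<N. \<exists>j<N. Y c d (rs ! i) (rs ! j))})
     \<le> (K\<^sup>2 + real N * K * real l) / (h * g * T) * Om"
    using second_moment[where W=W and Yb="Y c d" and L="real l" and N=N, OF finW outd ind N4 Tpos'] Teq
    unfolding K_def h_def g_def Om_def by simp
  have hg: "h * g \<ge> (real N)\<^sup>2 / 8"
  proof -
    have "h \<ge> real N / 4" unfolding h_def using N4 by linarith
    moreover have "g \<ge> real N / 2" unfolding g_def by linarith
    moreover have "real N / 4 \<ge> 0" by simp
    ultimately have "h * g \<ge> (real N / 4) * (real N / 2)" by (intro mult_mono) auto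
    then show ?thesis by (simp add: power2_eq_square)
  qed
  have Npos: "real N > 0" using N4 by simp
  have lpos: "real l - 2 > 0" using l by simp
  have den: "h * g * T \<ge> (real N)\<^sup>2 / 8 * ((real l - 2) * q ^ (l - 3))"
  proof (rule mult_mono)
    show "0 \<le> h * g" unfolding h_def g_def by simp
  qed (use hg Tlow Tpos Npos lpos q3 in auto)
  have denpos: "(real N)\<^sup>2 / 8 * ((real l - 2) * q ^ (l - 3)) > 0" using Npos lpos q3 by simp
  have num: "K\<^sup>2 + real N * K * real l \<le> 4 * q ^ (2 * l) + 2 * real N * real l * q ^ l"
  proof -
    have "K\<^sup>2 \<le> (2 * q ^ l)\<^sup>2" using Kup K0 by (intro power_mono) auto
    moreover have "real N * K * real l \<le> real N * (2 * q ^ l) * real l"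
      using Kup by (intro mult_right_mono mult_left_mono) auto
    ultimately show ?thesis by (simp add: power_mult power2_eq_square algebra_simps)
  qed
  have "(K\<^sup>2 + real N * K * real l) / (h * g * T)
      \<le> (4 * q ^ (2 * l) + 2 * real N * real l * q ^ l) / ((real N)\<^sup>2 / 8 * ((real l - 2) * q ^ (l - 3)))"
    using num den denpos K0 q3 by (intro frac_le) auto
  also have "\<dots> = 32 * q ^ 3 * q ^ l / ((real N)\<^sup>2 * (real l - 2)) + 16 * q ^ 3 * real l / (real N * (real l - 2))"
  proof -
    obtain r where r: "l = r + 3" using l by (metis add.commute le_add_diff_inverse)
    have e2: "q ^ l = q ^ 3 * q ^ r" by (simp add: r power_add mult_ac)
    have e1: "q ^ (2 * l) = q ^ l * q ^ l" by (simp add: mult_2 power_add)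
    have e3: "q ^ (2 * l) = q ^ l * q ^ 3 * q ^ r" unfolding e1 by (subst (2) e2) (simp add: mult_ac)
    have e4: "l - 3 = r" using r by simp
    have Qpos: "q ^ r > 0" using q3 by simp
    have "(4 * q ^ (2 * l) + 2 * real N * real l * q ^ l) / ((real N)\<^sup>2 / 8 * ((real l - 2) * q ^ (l - 3)))
      = (4 * (q ^ l * q ^ 3 * q ^ r) + 2 * real N * real l * (q ^ 3 * q ^ r)) / ((real N)\<^sup>2 / 8 * ((real l - 2) * q ^ r))"
      by (subst e3, subst (2) e2, subst e4) (rule refl)
    also have "\<dots> = 32 * q ^ 3 * q ^ l / ((real N)\<^sup>2 * (real l - 2)) + 16 * q ^ 3 * real l / (real N * (real l - 2))"
      by (rule aux_field[OF Npos lpos Qpos])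
    finally show ?thesis .
  qed
  finally have "(K\<^sup>2 + real N * K * real l) / (h * g * T) \<le>
     32 * q ^ 3 * q ^ l / ((real N)\<^sup>2 * (real l - 2)) + 16 * q ^ 3 * real l / (real N * (real l - 2))" .
  moreover have "Om \<ge> 0" unfolding Om_def by simp
  ultimately show ?thesis using main unfolding W_def Om_def
    by (meson mult_right_mono order_trans)
qed


definition Bd :: "real \<Rightarrow> nat \<Rightarrow> nat \<Rightarrow> real" where
  "Bd q N l = 32 * q ^ 3 * q ^ l / ((real N)\<^sup>2 * (real l - 2)) + 16 * q ^ 3 * real l / (real N * (real l - 2))"

lemma relator_tuples_tup: "relator_tuples m f l = tup (reduced_words m l) (num_relators m f l)"
  unfolding relator_tuples_def tup_def by auto

lemma good_group:
  assumes m: "m \<ge> 1"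
    and good: "\<And>x. x \<in> letters m \<Longrightarrow> x \<noteq> (0, False) \<Longrightarrow>
        \<exists>i<length rs. \<exists>j<length rs. Y x (0, False) (rs ! i) (rs ! j)"
  shows "presented_group m (set rs) \<cong> singleton_group () \<or> presented_group m (set rs) \<cong> Z2_group"
proof (rule group_conclusion[OF m])
  fix x assume x: "x \<in> letters m"
  show "([x], [(0, False)]) \<in> E (set rs)"
  proof (cases "x = (0, False)")
    case True then show ?thesis by (simp add: E_refl)
  next
    case False
    then obtain i j where ij: "i < length rs" "j < length rs" "Y x (0, False) (rs ! i) (rs ! j)"
      using good x by blast
    then obtain u v where uv: "rs ! i = u @ [x] @ v" "rs ! j = u @ [(0, False)] @ v"
      unfolding Y_def by blast
    have "u @ [x] @ v \<in> set rs" "u @ [(0, False)] @ v \<in> set rs" using ij uv nth_mem by metis+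
    then show ?thesis by (rule E_letter_eq)
  qed
qed

lemma prob_le1: "prob_H m f l P \<le> 1"
proof -
  have "card {rs \<in> relator_tuples m f l. P (presented_group m (set rs))} \<le> card (relator_tuples m f l)"
    by (rule card_mono) (auto simp: relator_tuples_tup finite_tup)
  then show ?thesis unfolding prob_H_def
    by (cases "card (relator_tuples m f l) = 0") (auto simp: divide_le_eq_1)
qed

lemma prob_lower:
  fixes m l :: nat and f :: "nat \<Rightarrow> real"
  assumes m: "m \<ge> 2" and l: "l \<ge> 3" and N4: "num_relators m f l \<ge> 4"
  shows "prob_H m f l (\<lambda>G. G \<cong> singleton_group () \<or> G \<cong> Z2_group)
     \<ge> 1 - real (2 * m) * Bd (real (2 * m - 1)) (num_relators m f l) l"
proof -
  define N where "N = num_relators m f l"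
  define W where "W = reduced_words m l"
  define Om where "Om = tup W N"
  define a0 :: letter where "a0 = (0, False)"
  define Xs where "Xs = letters m - {a0}"
  define B where "B = Bd (real (2 * m - 1)) N l"
  define Bad where "Bad x = {rs \<in> Om. \<not> (\<exists>i<N. \<exists>j<N. Y x a0 (rs ! i) (rs ! j))}" for x
  have a0: "a0 \<in> letters m" using m by (simp add: a0_def letters_def)
  have fO: "finite Om" unfolding Om_def W_def by (simp add: finite_tup)
  have fX: "finite Xs" unfolding Xs_def by simp
  have cX: "card Xs \<le> 2 * m" unfolding Xs_def using a0 by (simp add: card_letters)
  have cO: "card Om > 0"
  proof -
    have "(2 * m - 1) ^ l \<ge> 1" using m by simp
    then have "card W \<ge> 1" unfolding W_def using RW_lower[of m l] by linarith
    then show ?thesis unfolding Om_def using card_tup[of W N] by (simp add: W_def)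
  qed
  have Bnn: "B \<ge> 0" unfolding B_def Bd_def using l m by simp
  have badx: "real (card (Bad x)) \<le> B * real (card Om)" if x: "x \<in> Xs" for x
  proof -
    have x1: "x \<in> letters m" "x \<noteq> a0" using x unfolding Xs_def by blast+
    show ?thesis using bad_bound[OF m l x1(1) a0 x1(2) N4[folded N_def]]
      unfolding Bad_def Om_def W_def B_def Bd_def .
  qed
  have sub: "Om - (\<Union>x\<in>Xs. Bad x) \<subseteq> {rs \<in> Om. presented_group m (set rs) \<cong> singleton_group () \<or> presented_group m (set rs) \<cong> Z2_group}"
  proof
    fix rs assume rs: "rs \<in> Om - (\<Union>x\<in>Xs. Bad x)"
    have len: "length rs = N" using rs unfolding Om_def tup_def by auto
    have "presented_group m (set rs) \<cong> singleton_group () \<or> presented_group m (set rs) \<cong> Z2_group"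
    proof (rule good_group)
      show "m \<ge> 1" using m by simp
      fix x assume "x \<in> letters m" "x \<noteq> (0, False)"
      then have "x \<in> Xs" unfolding Xs_def a0_def by simp
      then have "rs \<notin> Bad x" using rs by blast
      then show "\<exists>i<length rs. \<exists>j<length rs. Y x (0, False) (rs ! i) (rs ! j)"
        using rs len unfolding Bad_def a0_def by auto
    qed
    then show "rs \<in> {rs \<in> Om. presented_group m (set rs) \<cong> singleton_group () \<or> presented_group m (set rs) \<cong> Z2_group}"
      using rs by blast
  qed
  have "real (card Om) - real (card (\<Union>x\<in>Xs. Bad x)) \<le> real (card (Om - (\<Union>x\<in>Xs. Bad x)))"
  proof -
    have U: "(\<Union>x\<in>Xs. Bad x) \<subseteq> Om" unfolding Bad_def by blast
    have fU: "finite (\<Union>x\<in>Xs. Bad x)" using U fO finite_subset by blast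
    have "card (Om - (\<Union>x\<in>Xs. Bad x)) = card Om - card (\<Union>x\<in>Xs. Bad x)"
      by (rule card_Diff_subset[OF fU U])
    moreover have "card (\<Union>x\<in>Xs. Bad x) \<le> card Om" by (rule card_mono[OF fO U])
    ultimately show ?thesis by (simp add: of_nat_diff)
  qed
  moreover have "real (card (\<Union>x\<in>Xs. Bad x)) \<le> real (2 * m) * B * real (card Om)"
  proof -
    have "card (\<Union>x\<in>Xs. Bad x) \<le> (\<Sum>x\<in>Xs. card (Bad x))" by (rule card_UN_le[OF fX])
    then have "real (card (\<Union>x\<in>Xs. Bad x)) \<le> (\<Sum>x\<in>Xs. real (card (Bad x)))"
      by (metis of_nat_le_iff of_nat_sum)
    also have "\<dots> \<le> (\<Sum>x\<in>Xs. B * real (card Om))" by (rule sum_mono) (rule badx)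
    also have "\<dots> = real (card Xs) * (B * real (card Om))" by simp
    also have "\<dots> \<le> real (2 * m) * (B * real (card Om))"
      using cX Bnn by (intro mult_right_mono) auto
    finally show ?thesis by (simp add: mult.assoc)
  qed
  moreover have "card (Om - (\<Union>x\<in>Xs. Bad x)) \<le> card {rs \<in> Om. presented_group m (set rs) \<cong> singleton_group () \<or> presented_group m (set rs) \<cong> Z2_group}"
    using sub fO by (intro card_mono) auto
  ultimately have "real (card Om) * (1 - real (2 * m) * B) \<le> real (card {rs \<in> Om. presented_group m (set rs) \<cong> singleton_group () \<or> presented_group m (set rs) \<cong> Z2_group})"
    by (simp add: algebra_simps)
  then show ?thesis
    unfolding prob_H_def relator_tuples_tup N_def[symmetric] W_def[symmetric] Om_def[symmetric] B_def[symmetric]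
    using cO by (simp add: le_divide_eq mult.commute)
qed


lemma term1:
  fixes q x F s Nr :: real and kk :: nat
  assumes q: "q \<ge> 3" and x: "x \<ge> 3" and kF: "2 * x * F \<le> real kk"
    and rat: "(2 * real kk + 2) * q ^ (2 * kk) \<le> x - 2"
    and s: "s = q powr (x * (1/2 - F))" and s2: "s \<ge> 2" and Nr: "Nr \<ge> s - 1"
    and ql: "ql = q powr x"
  shows "ql / Nr\<^sup>2 \<le> 4 * sqrt (x - 2)"
proof -
  have qpos: "q > 0" using q by simp
  have Nr2: "Nr \<ge> s / 2" using Nr s2 by simp
  have spos: "s > 0" using s2 by simp
  have "Nr\<^sup>2 \<ge> (s / 2)\<^sup>2" using Nr2 spos by (intro power_mono) auto
  then have NN: "Nr\<^sup>2 \<ge> s\<^sup>2 / 4" by (simp add: power2_eq_square)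
  have ss: "s\<^sup>2 = q powr (x * (1 - 2 * F))"
    unfolding s power2_eq_square by (simp add: powr_add[symmetric] algebra_simps)
  have "ql / s\<^sup>2 = q powr (2 * x * F)"
    unfolding ss ql by (simp add: powr_diff[symmetric] algebra_simps)
  also have "\<dots> \<le> q powr (real kk)" using kF q by (intro powr_mono) auto
  also have "\<dots> = q ^ kk" using qpos by (simp add: powr_realpow)
  also have "q ^ kk \<le> sqrt (x - 2)"
  proof (rule real_le_rsqrt)
    have "(q ^ kk)\<^sup>2 = q ^ (2 * kk)" by (simp add: power_mult[symmetric] mult.commute)
    also have "\<dots> \<le> (2 * real kk + 2) * q ^ (2 * kk)" using qpos by simp
    finally show "(q ^ kk)\<^sup>2 \<le> x - 2" using rat by linarith
  qed
  finally have A: "ql / s\<^sup>2 \<le> sqrt (x - 2)" .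
  have qlpos: "ql \<ge> 0" unfolding ql by simp
  have "ql / Nr\<^sup>2 \<le> ql / (s\<^sup>2 / 4)"
    using NN spos qlpos Nr2 by (intro divide_left_mono) auto
  also have "\<dots> = 4 * (ql / s\<^sup>2)" by simp
  also have "\<dots> \<le> 4 * sqrt (x - 2)" using A by simp
  finally show ?thesis .
qed

lemma Bd_bound:
  fixes q :: real and N l :: nat
  assumes q: "q \<ge> 3" and l: "l \<ge> 3" and N: "N \<ge> 1" and t1: "q ^ l / (real N)\<^sup>2 \<le> 4 * sqrt (real l - 2)"
  shows "Bd q N l \<le> 128 * q ^ 3 / sqrt (real l - 2) + 48 * q ^ 3 / real N"
proof -
  have lp: "real l - 2 > 0" using l by simp
  have Np: "real N > 0" using N by simp
  have "32 * q ^ 3 * q ^ l / ((real N)\<^sup>2 * (real l - 2)) = 32 * q ^ 3 * (q ^ l / (real N)\<^sup>2) / (real l - 2)"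
    by simp
  also have "\<dots> \<le> 32 * q ^ 3 * (4 * sqrt (real l - 2)) / (real l - 2)"
    using t1 q lp by (intro divide_right_mono mult_left_mono) auto
  also have "\<dots> = 128 * q ^ 3 / sqrt (real l - 2)"
  proof -
    define r where "r = sqrt (real l - 2)"
    have rr: "real l - 2 = r * r" unfolding r_def using lp by simp
    have rp: "r > 0" unfolding r_def using lp by simp
    have "32 * q ^ 3 * (4 * r) / (real l - 2) = 128 * q ^ 3 / r" unfolding rr using rp by (simp add: field_simps)
    then show ?thesis unfolding r_def .
  qed
  finally have 1: "32 * q ^ 3 * q ^ l / ((real N)\<^sup>2 * (real l - 2)) \<le> 128 * q ^ 3 / sqrt (real l - 2)" .
  have "16 * q ^ 3 * real l / (real N * (real l - 2)) = (16 * q ^ 3 / real N) * (real l / (real l - 2))"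
    by simp
  also have "\<dots> \<le> (16 * q ^ 3 / real N) * 3"
  proof (rule mult_left_mono)
    show "real l / (real l - 2) \<le> 3" using lp l by (simp add: divide_le_eq)
    show "0 \<le> 16 * q ^ 3 / real N" using q by simp
  qed
  also have "\<dots> = 48 * q ^ 3 / real N" by simp
  finally have 2: "16 * q ^ 3 * real l / (real N * (real l - 2)) \<le> 48 * q ^ 3 / real N" .
  show ?thesis unfolding Bd_def using 1 2 by linarith
qed


theorem theorem3p1:
  fixes m :: nat and f :: "nat \<Rightarrow> real" and k :: "nat \<Rightarrow> nat"
  assumes "m \<ge> 2"
    and "f \<longlonglongrightarrow> 0"
    and "\<And>l. k l \<le> l"
    and "filterlim (\<lambda>l. real (k l) - 2 * real l * f l) at_top sequentially"
    and "filterlim (\<lambda>l. (real l - 2) / ((2 * real (k l) + 2) * (2 * real m - 1) ^ (2 * k l)))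
           at_top sequentially"
  shows "(\<lambda>l. prob_H m f l (\<lambda>G. G \<cong> singleton_group () \<or> G \<cong> Z2_group)) \<longlonglongrightarrow> 1"
proof -
  note m = assms(1)
  define q where "q = real (2 * m - 1)"
  have q3: "q \<ge> 3" unfolding q_def using m by simp
  have qq: "2 * real m - 1 = q" unfolding q_def using m by (simp add: of_nat_diff)
  define s where "s l = q powr (real l * (1/2 - f l))" for l
  define N where "N l = num_relators m f l" for l
  have s0: "s l \<ge> 0" for l unfolding s_def by simp
  have Nreal: "real (N l) \<ge> s l - 1" for l
  proof -
    have "N l = nat \<lfloor>s l\<rfloor>" unfolding N_def num_relators_def s_def qq ..
    moreover have "\<lfloor>s l\<rfloor> \<ge> 0" using s0 by simp
    ultimately have "real (N l) = real_of_int \<lfloor>s l\<rfloor>" by simp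
    then show ?thesis using real_of_int_floor_gt_diff_one[of "s l"] by linarith
  qed
  have ev_f: "eventually (\<lambda>l. \<bar>f l\<bar> < 1/4) sequentially"
    using tendstoD[OF assms(2), of "1/4"] by (simp add: dist_real_def)
  have ev_k: "eventually (\<lambda>l. real (k l) - 2 * real l * f l \<ge> 0) sequentially"
    using assms(4) unfolding filterlim_at_top by blast
  have ev_r: "eventually (\<lambda>l. (real l - 2) / ((2 * real (k l) + 2) * (2 * real m - 1) ^ (2 * k l)) \<ge> 1) sequentially"
    using assms(5) unfolding filterlim_at_top by blast
  have ev_l: "eventually (\<lambda>l. l \<ge> 3) sequentially" by (rule eventually_ge_at_top)
  have lim3: "filterlim (\<lambda>l::nat. (3::real) powr (real l / 4)) at_top sequentially" by real_asymp
  have "eventually (\<lambda>l. 3 powr (real l / 4) \<le> s l) sequentially"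
    using ev_f
  proof (rule eventually_mono)
    fix l assume fl: "\<bar>f l\<bar> < 1/4"
    have "(3::real) powr (real l / 4) \<le> q powr (real l / 4)" using q3 by (intro powr_mono2) auto
    also have "\<dots> \<le> q powr (real l * (1/2 - f l))"
    proof (rule powr_mono)
      have "1/4 \<le> 1/2 - f l" using fl by (simp add: abs_less_iff)
      then have "real l * (1/4) \<le> real l * (1 / 2 - f l)" by (intro mult_left_mono) auto
      then show "real l / 4 \<le> real l * (1 / 2 - f l)" by simp
      show "1 \<le> q" using q3 by simp
    qed
    finally show "3 powr (real l / 4) \<le> s l" unfolding s_def .
  qed
  then have s_top: "filterlim s at_top sequentially" by (rule filterlim_at_top_mono[OF lim3])
  have N_top: "filterlim (\<lambda>l. real (N l)) at_top sequentially"
    unfolding filterlim_at_top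
  proof
    fix Z :: real
    have "eventually (\<lambda>l. Z + 1 \<le> s l) sequentially" using s_top unfolding filterlim_at_top by blast
    then show "eventually (\<lambda>l. Z \<le> real (N l)) sequentially"
      by (rule eventually_mono) (use Nreal in \<open>smt (verit)\<close>)
  qed
  have ev_s: "eventually (\<lambda>l. s l \<ge> 8) sequentially" using s_top unfolding filterlim_at_top by blast
  define lower where "lower l = 1 - real (2 * m) * (128 * q ^ 3 * inverse (sqrt (real l - 2)) + 48 * q ^ 3 * inverse (real (N l)))" for l
  have low: "eventually (\<lambda>l. lower l \<le> prob_H m f l (\<lambda>G. G \<cong> singleton_group () \<or> G \<cong> Z2_group)) sequentially"
    using ev_f ev_k ev_r ev_l ev_s
  proof (eventually_elim)
    case (elim l)
    have l3: "l \<ge> 3" using elim by simp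
    have N4: "N l \<ge> 4"
    proof -
      have "real (N l) \<ge> 7" using Nreal[of l] elim by linarith
      then show ?thesis by linarith
    qed
    have den: "(2 * real (k l) + 2) * (2 * real m - 1) ^ (2 * k l) > 0" unfolding qq using q3 by simp
    have rat: "(2 * real (k l) + 2) * q ^ (2 * k l) \<le> real l - 2"
      using elim den by (simp add: le_divide_eq qq)
    have t1: "q ^ l / (real (N l))\<^sup>2 \<le> 4 * sqrt (real l - 2)"
    proof (rule term1[OF q3 _ _ rat _ _ Nreal])
      show "3 \<le> real l" using l3 by simp
      show "2 * real l * f l \<le> real (k l)" using elim by linarith
      show "s l = q powr (real l * (1 / 2 - f l))" unfolding s_def ..
      show "2 \<le> s l" using elim by linarith
      show "q ^ l = q powr real l" using q3 by (simp add: powr_realpow)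
    qed
    have B: "Bd q (N l) l \<le> 128 * q ^ 3 / sqrt (real l - 2) + 48 * q ^ 3 / real (N l)"
      using Bd_bound[OF q3 l3 _ t1] N4 by simp
    have P: "prob_H m f l (\<lambda>G. G \<cong> singleton_group () \<or> G \<cong> Z2_group) \<ge> 1 - real (2 * m) * Bd q (N l) l"
      using prob_lower[OF m l3 N4[unfolded N_def]] unfolding q_def N_def .
    have "real (2 * m) * Bd q (N l) l \<le> real (2 * m) * (128 * q ^ 3 / sqrt (real l - 2) + 48 * q ^ 3 / real (N l))"
      using B by (intro mult_left_mono) auto
    then show ?case using P unfolding lower_def by (simp add: divide_inverse)
  qed
  have up: "eventually (\<lambda>l. prob_H m f l (\<lambda>G. G \<cong> singleton_group () \<or> G \<cong> Z2_group) \<le> 1) sequentially"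
    by (intro always_eventually allI prob_le1)
  have lim_sqrt: "((\<lambda>l::nat. inverse (sqrt (real l - 2))) \<longlongrightarrow> 0) sequentially" by real_asymp
  have lim_N: "((\<lambda>l. inverse (real (N l))) \<longlongrightarrow> 0) sequentially"
    by (rule tendsto_inverse_0_at_top[OF N_top])
  have "(lower \<longlongrightarrow> 1 - real (2 * m) * (128 * q ^ 3 * 0 + 48 * q ^ 3 * 0)) sequentially"
    unfolding lower_def by (intro tendsto_intros lim_sqrt lim_N)
  then have lim_low: "(lower \<longlongrightarrow> 1) sequentially" by simp
  show ?thesis
    by (rule tendsto_sandwich[OF low up lim_low tendsto_const])
qed


end
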